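(* Consider the $K$-class system with class-wise distributions described in the context, with constants $\bar M_R,\bar L_R,\bar L_P,\bar L_Q>0$ and $\gamma\in[0,1)$. Let $\mathbf x_0^{\mathbf N}$ be initial states and $\bar{\boldsymbol\mu}_0\in\mathcal P^K(\mathcal X)$ their class-wise empirical distribution, let $\theta_k=N_k/N_{\mathrm{pop}}$ and $\boldsymbol\theta_M^{-1}=\max_{k\in[K]}\theta_k^{-1}$, and define $\bar C_R(\boldsymbol\theta)=\bar M_R+\bar L_R\boldsymbol\theta_M^{-1}$, $\bar C_P(\boldsymbol\theta)=2+\bar L_P\boldsymbol\theta_M^{-1}$, $\bar S_R(\boldsymbol\theta)=\bar M_R(1+\bar L_Q\boldsymbol\theta_M^{-1})+\bar L_R\boldsymbol\theta_M^{-1}(2+\bar L_Q\boldsymbol\theta_M^{-1})$, $\bar S_P(\boldsymbol\theta)=(1+\bar L_Q\boldsymbol\theta_M^{-1})+\bar L_P\boldsymbol\theta_M^{-1}(2+\bar L_Q\boldsymbol\theta_M^{-1})$. If $\gamma\bar S_P(\boldsymbol\theta)<1$, then for every $\bar{\boldsymbol\pi}\in\bar\Pi$, $$\Big|\bar v^{\mathbf N}(\mathbf x_0^{\mathbf N},\bar{\boldsymbol\pi})-\bar v^{\mathrm{MF}}(\bar{\boldsymbol\mu}_0,\bar{\boldsymbol\pi})\Big|\le\frac{\bar C_R(\boldsymbol\theta)}{1-\gamma}\sqrt{|\mathcal U|}\frac1{N_{\mathrm{pop}}}\Big(\sum_k\sqrt{N_k}\Big)+\bar C_P(\boldsymbol\theta)\Big(\frac{\bar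 S_R(\boldsymbol\theta)}{\bar S_P(\boldsymbol\theta)-1}\Big)\sqrt{|\mathcal X||\mathcal U|}\frac1{N_{\mathrm{pop}}}\Big(\sum_k\sqrt{N_k}\Big)\Big[\frac1{1-\gamma\bar S_P(\boldsymbol\theta)}-\frac1{1-\gamma}\Big].$$
   Context: Fix integers $K\ge1$, $N_1,\dots,N_K\ge1$, $[K]=\{1,\dots,K\}$, $N_{\mathrm{pop}}=\sum_kN_k$, finite sets $\mathcal X,\mathcal U$. $\mathcal P(A)$ denotes probability distributions on $A$; $\mathcal P^K(A)=\mathcal P(A)^K$ with elements written $\bar{\boldsymbol\mu}(\cdot,k)$ and $|\bar{\boldsymbol\mu}|_1=\sum_k\sum_a|\bar{\boldsymbol\mu}(a,k)|$. Agent $j\in[N_k]$ of class $k$ has state $x_{j,k}^t$, action $u_{j,k}^t$; $\bar{\boldsymbol\mu}_t^{\mathbf N}(x,k)=\frac1{N_k}\sum_{j}\mathbf 1(x_{j,k}^t=x)$, $\bar{\boldsymbol\nu}_t^{\mathbf N}(u,k)=\frac1{N_k}\sum_j\mathbf 1(u_{j,k}^t=u)$. For each $k$: $\bar r_k:\mathcal X\times\mathcal U\times\mathcal P^K(\mathcal X)\times\mathcal P^K(\mathcal U)\to\mathbb R$, $\bar P_k:\mathcal X\times\mathcal U\times\mathcal P^K(\mathcal X)\times\mathcal P^K(\mathcal U)\to\mathcal P(\mathcal X)$ with $|\bar r_k|\le\bar M_R$, $|\bar r_k(x,u,\bar{\boldsymbol\mu}_1,\bar{\boldsymbol\nu}_1)-\bar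 r_k(x,u,\bar{\boldsymbol\mu}_2,\bar{\boldsymbol\nu}_2)|\le\bar L_R(|\bar{\boldsymbol\mu}_1-\bar{\boldsymbol\mu}_2|_1+|\bar{\boldsymbol\nu}_1-\bar{\boldsymbol\nu}_2|_1)$, $|\bar P_k(x,u,\bar{\boldsymbol\mu}_1,\bar{\boldsymbol\nu}_1)-\bar P_k(x,u,\bar{\boldsymbol\mu}_2,\bar{\boldsymbol\nu}_2)|_1\le\bar L_P(|\bar{\boldsymbol\mu}_1-\bar{\boldsymbol\mu}_2|_1+|\bar{\boldsymbol\nu}_1-\bar{\boldsymbol\nu}_2|_1)$. A policy $\bar{\boldsymbol\pi}=\{\bar{\boldsymbol\pi}_t\}_{t\ge0}$, $\bar{\boldsymbol\pi}_t=(\bar\pi_k^t)_k$, has decision rules $\bar\pi_k^t:\mathcal X\times\mathcal P^K(\mathcal X)\to\mathcal P(\mathcal U)$; $\bar\Pi$ is the set of policies with $|\bar\pi_k^t(x,\bar{\boldsymbol\mu}_1)-\bar\pi_k^t(x,\bar{\boldsymbol\mu}_2)|_1\le\bar L_Q|\bar{\boldsymbol\mu}_1-\bar{\boldsymbol\mu}_2|_1$. Dynamics: conditioned on all states, actions independent with $u_{j,k}^t\sim\bar\pi_k^t(x_{j,k}^t,\bar{\boldsymbol\mu}_t^{\mathbf N})$; conditioned on states and actions, next states independent with $x_{j,k}^{t+1}\sim\bar P_k(x_{j,k}^t,u_{j,k}^t,\bar{\boldsymbol\mu}_t^{\mathbf N},\bar{\boldsymbol\nu}_t^{\mathbf N})$.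 $\bar v^{\mathbf N}(\mathbf x_0^{\mathbf N},\bar{\boldsymbol\pi})=\frac1{N_{\mathrm{pop}}}\sum_k\sum_j\mathbb E[\sum_{t\ge0}\gamma^t\bar r_k(x_{j,k}^t,u_{j,k}^t,\bar{\boldsymbol\mu}_t^{\mathbf N},\bar{\boldsymbol\nu}_t^{\mathbf N})]$. Mean-field: $\bar\nu^{\mathrm{MF}}(\bar{\boldsymbol\mu},\bar{\boldsymbol\pi})(u,k)=\sum_x\bar\pi_k(x,\bar{\boldsymbol\mu})(u)\bar{\boldsymbol\mu}(x,k)$, $\bar P^{\mathrm{MF}}(\bar{\boldsymbol\mu},\bar{\boldsymbol\pi})(x',k)=\sum_{x,u}\bar{\boldsymbol\mu}(x,k)\bar\pi_k(x,\bar{\boldsymbol\mu})(u)\bar P_k(x,u,\bar{\boldsymbol\mu},\bar\nu^{\mathrm{MF}}(\bar{\boldsymbol\mu},\bar{\boldsymbol\pi}))(x')$, $\bar r_k^{\mathrm{MF}}(\bar{\boldsymbol\mu},\bar{\boldsymbol\pi})=\sum_{x,u}\bar{\boldsymbol\mu}(x,k)\bar\pi_k(x,\bar{\boldsymbol\mu})(u)\bar r_k(x,u,\bar{\boldsymbol\mu},\bar\nu^{\mathrm{MF}}(\bar{\boldsymbol\mu},\bar{\boldsymbol\pi}))$; with $\bar{\boldsymbol\mu}_{t+1}=\bar P^{\mathrm{MF}}(\bar{\boldsymbol\mu}_t,\bar{\boldsymbol\pi}_t)$, $\bar v^{\mathrm{MF}}(\bar{\boldsymbol\mu}_0,\bar{\boldsymbol\pi})=\sum_k\theta_k\sum_{t\ge0}\gamma^t\bar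 r_k^{\mathrm{MF}}(\bar{\boldsymbol\mu}_t,\bar{\boldsymbol\pi}_t)$. *)

theory Defs
  imports "HOL-Probability.Probability"
begin

definition PK :: "nat \<Rightarrow> ('a::finite \<Rightarrow> nat \<Rightarrow> real) set" where
  "PK K = {\<mu>. (\<forall>x k. K \<le> k \<longrightarrow> \<mu> x k = 0) \<and>
              (\<forall>k<K. (\<forall>x. 0 \<le> \<mu> x k) \<and> (\<Sum>x\<in>UNIV. \<mu> x k) = 1)}"

definition l1K :: "nat \<Rightarrow> ('a::finite \<Rightarrow> nat \<Rightarrow> real) \<Rightarrow> ('a \<Rightarrow> nat \<Rightarrow> real) \<Rightarrow> real" where
  "l1K K \<mu>1 \<mu>2 = (\<Sum>k<K. \<Sum>x\<in>UNIV. \<bar>\<mu>1 x k - \<mu>2 x k\<bar>)"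

definition l1pmf :: "'a::finite pmf \<Rightarrow> 'a pmf \<Rightarrow> real" where
  "l1pmf p q = (\<Sum>x\<in>UNIV. \<bar>pmf p x - pmf q x\<bar>)"

definition Npop :: "nat \<Rightarrow> (nat \<Rightarrow> nat) \<Rightarrow> nat" where
  "Npop K N = (\<Sum>k<K. N k)"

definition agents :: "nat \<Rightarrow> (nat \<Rightarrow> nat) \<Rightarrow> (nat \<times> nat) set" where
  "agents K N = {(k, j). k < K \<and> j < N k}"

definition emp :: "nat \<Rightarrow> (nat \<Rightarrow> nat) \<Rightarrow> (nat \<times> nat \<Rightarrow> 'a) \<Rightarrow> 'a \<Rightarrow> nat \<Rightarrow> real" where
  "emp K N s x k = (if k < K then real (card {j. j < N k \<and> s (k, j) = x}) / real (N k) else 0)"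

definition action_pmf ::
  "nat \<Rightarrow> (nat \<Rightarrow> nat) \<Rightarrow> (nat \<Rightarrow> nat \<Rightarrow> 'x \<Rightarrow> ('x \<Rightarrow> nat \<Rightarrow> real) \<Rightarrow> 'u pmf)
   \<Rightarrow> nat \<Rightarrow> (nat \<times> nat \<Rightarrow> 'x) \<Rightarrow> (nat \<times> nat \<Rightarrow> 'u) pmf" where
  "action_pmf K N pol t s =
     Pi_pmf (agents K N) undefined (\<lambda>(k, j). pol t k (s (k, j)) (emp K N s))"

definition next_pmf ::
  "nat \<Rightarrow> (nat \<Rightarrow> nat) \<Rightarrow> (nat \<Rightarrow> 'x \<Rightarrow> 'u \<Rightarrow> ('x \<Rightarrow> nat \<Rightarrow> real) \<Rightarrow> ('u \<Rightarrow> nat \<Rightarrow> real) \<Rightarrow> 'x pmf)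
   \<Rightarrow> (nat \<times> nat \<Rightarrow> 'x) \<Rightarrow> (nat \<times> nat \<Rightarrow> 'u) \<Rightarrow> (nat \<times> nat \<Rightarrow> 'x) pmf" where
  "next_pmf K N P s a =
     Pi_pmf (agents K N) undefined (\<lambda>(k, j). P k (s (k, j)) (a (k, j)) (emp K N s) (emp K N a))"

fun state_dist ::
  "nat \<Rightarrow> (nat \<Rightarrow> nat) \<Rightarrow> (nat \<Rightarrow> nat \<Rightarrow> 'x \<Rightarrow> ('x \<Rightarrow> nat \<Rightarrow> real) \<Rightarrow> 'u pmf)
   \<Rightarrow> (nat \<Rightarrow> 'x \<Rightarrow> 'u \<Rightarrow> ('x \<Rightarrow> nat \<Rightarrow> real) \<Rightarrow> ('u \<Rightarrow> nat \<Rightarrow> real) \<Rightarrow> 'x pmf)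
   \<Rightarrow> (nat \<times> nat \<Rightarrow> 'x) \<Rightarrow> nat \<Rightarrow> (nat \<times> nat \<Rightarrow> 'x) pmf" where
  "state_dist K N pol P x0 0 = return_pmf x0"
| "state_dist K N pol P x0 (Suc t) =
     bind_pmf (state_dist K N pol P x0 t)
       (\<lambda>s. bind_pmf (action_pmf K N pol t s) (\<lambda>a. next_pmf K N P s a))"

definition sa_dist where
  "sa_dist K N pol P x0 t =
     bind_pmf (state_dist K N pol P x0 t) (\<lambda>s. map_pmf (\<lambda>a. (s, a)) (action_pmf K N pol t s))"

definition stage_reward ::
  "nat \<Rightarrow> (nat \<Rightarrow> nat) \<Rightarrow> (nat \<Rightarrow> 'x \<Rightarrow> 'u \<Rightarrow> ('x \<Rightarrow> nat \<Rightarrow> real) \<Rightarrow> ('u \<Rightarrow> nat \<Rightarrow> real) \<Rightarrow> real)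
   \<Rightarrow> (nat \<times> nat \<Rightarrow> 'x) \<Rightarrow> (nat \<times> nat \<Rightarrow> 'u) \<Rightarrow> real" where
  "stage_reward K N r s a =
     (\<Sum>k<K. \<Sum>j<N k. r k (s (k, j)) (a (k, j)) (emp K N s) (emp K N a))"

text \<open>N-agent value: (1/N_pop) sum_k sum_j E[sum_t gamma^t r_k(...)], with the expectation
  of the discounted sum written as the sum of discounted expected stage rewards.\<close>
definition vN where
  "vN K N \<gamma> pol P r x0 =
     (1 / real (Npop K N)) *
     (\<Sum>t. \<gamma> ^ t * measure_pmf.expectation (sa_dist K N pol P x0 t)
                      (\<lambda>(s, a). stage_reward K N r s a))"

definition nuMF :: "(nat \<Rightarrow> 'x::finite \<Rightarrow> ('x \<Rightarrow> nat \<Rightarrow> real) \<Rightarrow> 'u pmf)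
   \<Rightarrow> ('x \<Rightarrow> nat \<Rightarrow> real) \<Rightarrow> 'u \<Rightarrow> nat \<Rightarrow> real" where
  "nuMF pt \<mu> u k = (\<Sum>x\<in>UNIV. pmf (pt k x \<mu>) u * \<mu> x k)"

definition PMF :: "(nat \<Rightarrow> 'x \<Rightarrow> 'u \<Rightarrow> ('x \<Rightarrow> nat \<Rightarrow> real) \<Rightarrow> ('u \<Rightarrow> nat \<Rightarrow> real) \<Rightarrow> 'x pmf)
   \<Rightarrow> (nat \<Rightarrow> 'x::finite \<Rightarrow> ('x \<Rightarrow> nat \<Rightarrow> real) \<Rightarrow> 'u::finite pmf)
   \<Rightarrow> ('x \<Rightarrow> nat \<Rightarrow> real) \<Rightarrow> 'x \<Rightarrow> nat \<Rightarrow> real" where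
  "PMF P pt \<mu> x' k =
     (\<Sum>x\<in>UNIV. \<Sum>u\<in>UNIV. \<mu> x k * pmf (pt k x \<mu>) u * pmf (P k x u \<mu> (nuMF pt \<mu>)) x')"

definition rMF :: "(nat \<Rightarrow> 'x \<Rightarrow> 'u \<Rightarrow> ('x \<Rightarrow> nat \<Rightarrow> real) \<Rightarrow> ('u \<Rightarrow> nat \<Rightarrow> real) \<Rightarrow> real)
   \<Rightarrow> (nat \<Rightarrow> 'x::finite \<Rightarrow> ('x \<Rightarrow> nat \<Rightarrow> real) \<Rightarrow> 'u::finite pmf)
   \<Rightarrow> ('x \<Rightarrow> nat \<Rightarrow> real) \<Rightarrow> nat \<Rightarrow> real" where
  "rMF r pt \<mu> k =
     (\<Sum>x\<in>UNIV. \<Sum>u\<in>UNIV. \<mu> x k * pmf (pt k x \<mu>) u * r k x u \<mu> (nuMF pt \<mu>))"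

fun mu_traj :: "(nat \<Rightarrow> 'x \<Rightarrow> 'u \<Rightarrow> ('x \<Rightarrow> nat \<Rightarrow> real) \<Rightarrow> ('u \<Rightarrow> nat \<Rightarrow> real) \<Rightarrow> 'x pmf)
   \<Rightarrow> (nat \<Rightarrow> nat \<Rightarrow> 'x::finite \<Rightarrow> ('x \<Rightarrow> nat \<Rightarrow> real) \<Rightarrow> 'u::finite pmf)
   \<Rightarrow> ('x \<Rightarrow> nat \<Rightarrow> real) \<Rightarrow> nat \<Rightarrow> ('x \<Rightarrow> nat \<Rightarrow> real)" where
  "mu_traj P pol \<mu>0 0 = \<mu>0"
| "mu_traj P pol \<mu>0 (Suc t) = PMF P (pol t) (mu_traj P pol \<mu>0 t)"

definition vMF where
  "vMF K N \<gamma> P r pol \<mu>0 =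
     (\<Sum>k<K. (real (N k) / real (Npop K N)) *
        (\<Sum>t. \<gamma> ^ t * rMF r (pol t) (mu_traj P pol \<mu>0 t) k))"

end

theory Submission
  imports Defs
begin

lemma exp_bind_pmf:
  fixes f :: "'b \<Rightarrow> real"
  assumes "\<And>y. \<bar>f y\<bar> \<le> B"
  shows "measure_pmf.expectation (bind_pmf M N) f = measure_pmf.expectation M (\<lambda>x. measure_pmf.expectation (N x) f)"
  unfolding measure_pmf_bind
  apply (rule integral_bind[where K="count_space UNIV" and B=B and B'=1])
  using assms by (auto simp: measure_pmf.emeasure_space_1 intro: measure_pmf.finite_measure_axioms measure_pmf_in_subprob_algebra)

lemma exp_bound:
  fixes f :: "'b \<Rightarrow> real"
  assumes "\<And>y. \<bar>f y\<bar> \<le> B"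
  shows "integrable (measure_pmf M) f"
  using assms by (intro measure_pmf.integrable_const_bound[where B=B]) auto

lemma Pi_comp_exp:
  fixes g :: "'b \<Rightarrow> real"
  assumes "finite A" "j \<in> A"
  shows "measure_pmf.expectation (Pi_pmf A d p) (\<lambda>\<omega>. g (\<omega> j)) = measure_pmf.expectation (p j) g"
proof -
  have "measure_pmf.expectation (Pi_pmf A d p) (\<lambda>\<omega>. g (\<omega> j)) =
        measure_pmf.expectation (map_pmf (\<lambda>\<omega>. \<omega> j) (Pi_pmf A d p)) g"
    by simp
  also have "map_pmf (\<lambda>\<omega>. \<omega> j) (Pi_pmf A d p) = p j"
    using Pi_pmf_component[OF assms(1), of j d p] assms(2) by simp
  finally show ?thesis .
qed

lemma Pi_mean:
  fixes g :: "'j \<Rightarrow> 'b \<Rightarrow> real"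
  assumes "finite A" "\<And>j y. \<bar>g j y\<bar> \<le> B"
  shows "measure_pmf.expectation (Pi_pmf A d p) (\<lambda>\<omega>. \<Sum>j\<in>A. g j (\<omega> j)) = (\<Sum>j\<in>A. measure_pmf.expectation (p j) (g j))"
proof -
  have "measure_pmf.expectation (Pi_pmf A d p) (\<lambda>\<omega>. \<Sum>j\<in>A. g j (\<omega> j)) =
     (\<Sum>j\<in>A. measure_pmf.expectation (Pi_pmf A d p) (\<lambda>\<omega>. g j (\<omega> j)))"
    by (rule Bochner_Integration.integral_sum) (rule exp_bound, rule assms(2))
  also have "\<dots> = (\<Sum>j\<in>A. measure_pmf.expectation (p j) (g j))"
    using assms(1) by (intro sum.cong refl) (simp add: Pi_comp_exp)
  finally show ?thesis .
qed

lemma exp_pair_pmf: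
  fixes f :: "'a \<times> 'b \<Rightarrow> real"
  assumes "\<And>y. \<bar>f y\<bar> \<le> B"
  shows "measure_pmf.expectation (pair_pmf M N) f = measure_pmf.expectation M (\<lambda>x. measure_pmf.expectation N (\<lambda>y. f (x, y)))"
  unfolding pair_pmf_def
  apply (subst exp_bind_pmf[where B=B])
   apply (rule assms)
  apply (subst exp_bind_pmf[where B=B])
   apply (rule assms)
  apply simp
  done

lemma sum_bound:
  fixes g :: "'j \<Rightarrow> real"
  assumes "\<And>j. \<bar>g j\<bar> \<le> B"
  shows "\<bar>\<Sum>j\<in>A. g j\<bar> \<le> real (card A) * B"
proof -
  have "\<bar>\<Sum>j\<in>A. g j\<bar> \<le> (\<Sum>j\<in>A. \<bar>g j\<bar>)" by (rule sum_abs)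
  also have "\<dots> \<le> (\<Sum>j\<in>A. B)" by (intro sum_mono assms)
  finally show ?thesis by simp
qed

lemma sq_bound:
  fixes a c :: real
  assumes "\<bar>a\<bar> \<le> c"
  shows "\<bar>a^2\<bar> \<le> c^2"
proof -
  have "\<bar>a^2\<bar> = \<bar>a\<bar>^2" by simp
  also have "\<dots> \<le> c^2" by (rule power_mono[OF assms]) simp
  finally show ?thesis .
qed

lemma Pi_var:
  fixes g :: "'j \<Rightarrow> 'b \<Rightarrow> real"
  assumes "finite A" "\<And>j y. \<bar>g j y\<bar> \<le> B"
    and "\<And>j. j \<in> A \<Longrightarrow> measure_pmf.expectation (p j) (g j) = 0"
  shows "measure_pmf.expectation (Pi_pmf A d p) (\<lambda>\<omega>. (\<Sum>j\<in>A. g j (\<omega> j))^2) =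
         (\<Sum>j\<in>A. measure_pmf.expectation (p j) (\<lambda>y. (g j y)^2))"
  using assms(1,3)
proof (induction A rule: finite_induct)
  case empty
  then show ?case by simp
next
  case (insert x A)
  have B0: "0 \<le> B" using assms(2)[of x undefined] by linarith
  define S where "S = (\<lambda>\<omega>. \<Sum>j\<in>A. g j (\<omega> j))"
  have Sb: "\<bar>S \<omega>\<bar> \<le> real (card A) * B" for \<omega>
    unfolding S_def by (rule sum_bound) (rule assms(2))
  have S0: "measure_pmf.expectation (Pi_pmf A d p) S = 0"
    unfolding S_def using insert by (subst Pi_mean[where B=B]) (auto intro: assms(2))
  have eq: "(\<Sum>j\<in>insert x A. g j ((f(x:=y)) j)) = g x y + S f" for f y
  proof -
    have "(\<Sum>j\<in>insert x A. g j ((f(x:=y)) j)) = g x y + (\<Sum>j\<in>A. g j ((f(x:=y)) j))"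
      using insert by simp
    also have "(\<Sum>j\<in>A. g j ((f(x:=y)) j)) = S f"
      unfolding S_def using insert by (intro sum.cong) auto
    finally show ?thesis .
  qed
  have bnd: "\<bar>(g x y + S f)^2\<bar> \<le> (B + real (card A) * B)^2" for y f
  proof -
    have "\<bar>g x y + S f\<bar> \<le> B + real (card A) * B"
      using assms(2)[of x y] Sb[of f] by linarith
    then show ?thesis by (rule sq_bound)
  qed
  have "measure_pmf.expectation (Pi_pmf (insert x A) d p) (\<lambda>\<omega>. (\<Sum>j\<in>insert x A. g j (\<omega> j))^2)
      = measure_pmf.expectation (map_pmf (\<lambda>(y,f). f(x:=y)) (pair_pmf (p x) (Pi_pmf A d p))) (\<lambda>\<omega>. (\<Sum>j\<in>insert x A. g j (\<omega> j))^2)"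
    by (simp only: Pi_pmf_insert[OF insert(1,2)])
  also have "\<dots> = measure_pmf.expectation (pair_pmf (p x) (Pi_pmf A d p)) (\<lambda>(y, f). (g x y + S f)^2)"
    by (simp only: integral_map_pmf case_prod_unfold eq)
  also have "\<dots> = measure_pmf.expectation (p x) (\<lambda>y. measure_pmf.expectation (Pi_pmf A d p) (\<lambda>f. (g x y + S f)^2))"
    by (subst exp_pair_pmf[where B="(B + real (card A) * B)^2"]) (auto intro: bnd)
  also have "\<dots> = measure_pmf.expectation (p x) (\<lambda>y. (g x y)^2 + measure_pmf.expectation (Pi_pmf A d p) (\<lambda>f. (S f)^2))"
  proof (intro Bochner_Integration.integral_cong refl)
    fix y
    have i1: "integrable (measure_pmf (Pi_pmf A d p)) S"
      by (rule exp_bound) (rule Sb)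
    have i2: "integrable (measure_pmf (Pi_pmf A d p)) (\<lambda>f. (S f)^2)"
      by (rule exp_bound[where B="(real (card A) * B)^2"])
         (rule sq_bound[OF Sb])
    have "(\<lambda>f. (g x y + S f)^2) = (\<lambda>f. (g x y)^2 + (2 * g x y) * S f + (S f)^2)"
      by (simp add: power2_eq_square algebra_simps)
    then have "measure_pmf.expectation (Pi_pmf A d p) (\<lambda>f. (g x y + S f)^2) =
       measure_pmf.expectation (Pi_pmf A d p) (\<lambda>f. (g x y)^2 + (2 * g x y) * S f + (S f)^2)" by simp
    also have "\<dots> = (g x y)^2 + (2 * g x y) * measure_pmf.expectation (Pi_pmf A d p) S
          + measure_pmf.expectation (Pi_pmf A d p) (\<lambda>f. (S f)^2)"
      using i1 i2 by (simp add: Bochner_Integration.integral_add)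
    finally show "measure_pmf.expectation (Pi_pmf A d p) (\<lambda>f. (g x y + S f)^2) =
       (g x y)^2 + measure_pmf.expectation (Pi_pmf A d p) (\<lambda>f. (S f)^2)"
      using S0 by simp
  qed
  also have "\<dots> = measure_pmf.expectation (p x) (\<lambda>y. (g x y)^2) + measure_pmf.expectation (Pi_pmf A d p) (\<lambda>f. (S f)^2)"
  proof -
    have "integrable (measure_pmf (p x)) (\<lambda>y. (g x y)^2)"
      by (rule exp_bound[where B="B^2"])
         (rule sq_bound[OF assms(2)])
    then show ?thesis by (simp add: Bochner_Integration.integral_add)
  qed
  also have "measure_pmf.expectation (Pi_pmf A d p) (\<lambda>f. (S f)^2) = (\<Sum>j\<in>A. measure_pmf.expectation (p j) (\<lambda>y. (g j y)^2))"
    unfolding S_def using insert by auto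
  finally show ?case using insert by simp
qed

lemma exp_abs_le_sqrt:
  fixes Z :: "'b \<Rightarrow> real"
  assumes "\<And>y. \<bar>Z y\<bar> \<le> B"
  shows "measure_pmf.expectation M (\<lambda>y. \<bar>Z y\<bar>) \<le> sqrt (measure_pmf.expectation M (\<lambda>y. (Z y)^2))"
proof -
  define m where "m = measure_pmf.expectation M (\<lambda>y. \<bar>Z y\<bar>)"
  have i1: "integrable M (\<lambda>y. \<bar>Z y\<bar>)" by (rule exp_bound[where B=B]) (use assms in simp)
  have i2: "integrable M (\<lambda>y. (Z y)^2)" by (rule exp_bound[where B="B^2"]) (rule sq_bound[OF assms])
  have "0 \<le> measure_pmf.expectation M (\<lambda>y. (\<bar>Z y\<bar> - m)^2)"
    by (rule Bochner_Integration.integral_nonneg) simp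
  also have "(\<lambda>y. (\<bar>Z y\<bar> - m)^2) = (\<lambda>y. (Z y)^2 - (2*m) * \<bar>Z y\<bar> + m^2)"
    by (auto simp: power2_eq_square algebra_simps)
  also have "measure_pmf.expectation M \<dots> = measure_pmf.expectation M (\<lambda>y. (Z y)^2) - (2*m) * m + m^2"
    using i1 i2 unfolding m_def
    by (simp add: Bochner_Integration.integral_add Bochner_Integration.integral_diff prob_space.prob_space measure_pmf.prob_space_axioms)
  finally have "m^2 \<le> measure_pmf.expectation M (\<lambda>y. (Z y)^2)"
    by (simp add: power2_eq_square)
  then have "sqrt (m^2) \<le> sqrt (measure_pmf.expectation M (\<lambda>y. (Z y)^2))"
    by (rule real_sqrt_le_mono)
  moreover have "m \<ge> 0" unfolding m_def by (rule Bochner_Integration.integral_nonneg) simp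
  ultimately show ?thesis unfolding m_def[symmetric] by simp
qed

lemma sum_sqrt_le:
  fixes a :: "'c \<Rightarrow> real"
  assumes "\<And>c. c \<in> C \<Longrightarrow> 0 \<le> a c"
  shows "(\<Sum>c\<in>C. sqrt (a c)) \<le> sqrt (real (card C) * (\<Sum>c\<in>C. a c))"
proof -
  have "(\<Sum>c\<in>C. sqrt (a c))^2 \<le> (\<Sum>c\<in>C. (sqrt (a c))^2) * card C"
    by (rule sum_squared_le_sum_of_squares)
  also have "(\<Sum>c\<in>C. (sqrt (a c))^2) = (\<Sum>c\<in>C. a c)"
    using assms by (intro sum.cong) auto
  finally have "(\<Sum>c\<in>C. sqrt (a c))^2 \<le> real (card C) * (\<Sum>c\<in>C. a c)" by (simp add: mult.commute)
  then show ?thesis by (rule real_le_rsqrt)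
qed

lemma pmf_exp_bounds:
  fixes f :: "'b \<Rightarrow> real"
  assumes "\<And>y. 0 \<le> f y" "\<And>y. f y \<le> 1"
  shows "0 \<le> measure_pmf.expectation M f" "measure_pmf.expectation M f \<le> 1"
proof -
  show "0 \<le> measure_pmf.expectation M f" by (rule Bochner_Integration.integral_nonneg) (simp add: assms)
  have "measure_pmf.expectation M f \<le> measure_pmf.expectation M (\<lambda>_. 1)"
    by (rule Bochner_Integration.integral_mono[OF exp_bound[where B=1]])
       (use assms in \<open>auto intro: abs_leI\<close>)
  then show "measure_pmf.expectation M f \<le> 1" by simp
qed

lemma conc:
  fixes h :: "'j \<Rightarrow> 'b \<Rightarrow> 'c::finite \<Rightarrow> real"
  assumes A: "finite A" "B \<subseteq> A"
    and h0: "\<And>j y c. 0 \<le> h j y c" and h1: "\<And>j y. (\<Sum>c\<in>UNIV. h j y c) = 1"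
  shows "measure_pmf.expectation (Pi_pmf A d p)
           (\<lambda>\<omega>. \<Sum>c\<in>UNIV. \<bar>\<Sum>j\<in>B. (h j (\<omega> j) c - measure_pmf.expectation (p j) (\<lambda>y. h j y c))\<bar>)
         \<le> sqrt (real CARD('c) * real (card B))"
proof -
  have hle: "h j y c \<le> 1" for j y c
  proof -
    have "h j y c \<le> (\<Sum>c\<in>UNIV. h j y c)"
      by (rule member_le_sum) (auto intro: h0)
    then show ?thesis using h1 by simp
  qed
  define m where "m = (\<lambda>j c. measure_pmf.expectation (p j) (\<lambda>y. h j y c))"
  have m01: "0 \<le> m j c" "m j c \<le> 1" for j c
    unfolding m_def by (rule pmf_exp_bounds; simp add: h0 hle)+
  define g where "g = (\<lambda>c j y. if j \<in> B then h j y c - m j c else 0)"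
  have gb: "\<bar>g c j y\<bar> \<le> 1" for c j y
    unfolding g_def using h0[of j y c] hle[of j y c] m01[of j c] by auto
  have Bfin: "finite B" using A finite_subset by blast
  have eqsum: "(\<Sum>j\<in>B. (h j (\<omega> j) c - m j c)) = (\<Sum>j\<in>A. g c j (\<omega> j))" for \<omega> c
    unfolding g_def using A by (simp add: sum.If_cases Int_absorb1)
  have Zb: "\<bar>\<Sum>j\<in>A. g c j (\<omega> j)\<bar> \<le> real (card A) * 1" for \<omega> c
    by (rule sum_bound) (rule gb)
  have gmean: "measure_pmf.expectation (p j) (g c j) = 0" for c j
  proof (cases "j \<in> B")
    case True
    have "measure_pmf.expectation (p j) (g c j) = measure_pmf.expectation (p j) (\<lambda>y. h j y c - m j c)"
      unfolding g_def using True by simp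
    also have "\<dots> = m j c - m j c"
      by (subst Bochner_Integration.integral_diff)
         (auto intro!: exp_bound[where B=1] simp: m_def measure_pmf.prob_space_axioms prob_space.prob_space abs_le_iff h0 hle
               intro: order_trans[OF _ h0])
    finally show ?thesis by simp
  qed (simp add: g_def)
  have var_le: "measure_pmf.expectation (p j) (\<lambda>y. (g c j y)^2) \<le> (if j \<in> B then m j c else 0)" for c j
  proof (cases "j \<in> B")
    case True
    have ih: "integrable (measure_pmf (p j)) (\<lambda>y. h j y c)"
      by (rule exp_bound[where B=1]) (simp add: abs_le_iff h0 hle order_trans[OF _ h0])
    have ih2: "integrable (measure_pmf (p j)) (\<lambda>y. (h j y c)^2)"
      by (rule exp_bound[where B=1]) (metis sq_bound abs_of_nonneg h0 hle one_power2)
    have "(\<lambda>y. (g c j y)^2) = (\<lambda>y. (h j y c)^2 - (2 * m j c) * h j y c + (m j c)^2)"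
      unfolding g_def using True by (auto simp: power2_eq_square algebra_simps)
    then have "measure_pmf.expectation (p j) (\<lambda>y. (g c j y)^2) =
        measure_pmf.expectation (p j) (\<lambda>y. (h j y c)^2) - (2 * m j c) * m j c + (m j c)^2"
      using ih ih2 by (simp add: Bochner_Integration.integral_add Bochner_Integration.integral_diff
          measure_pmf.prob_space_axioms prob_space.prob_space m_def)
    also have "\<dots> \<le> measure_pmf.expectation (p j) (\<lambda>y. (h j y c)^2)"
      by (simp add: power2_eq_square)
    also have "\<dots> \<le> m j c"
      unfolding m_def
    proof (rule Bochner_Integration.integral_mono[OF ih2 ih])
      fix y
      have "(h j y c)^2 \<le> h j y c * 1" unfolding power2_eq_square
        by (rule mult_left_mono[OF hle h0])
      then show "(h j y c)^2 \<le> h j y c" by simp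
    qed
    finally show ?thesis using True by simp
  qed (simp add: g_def)
  have each: "measure_pmf.expectation (Pi_pmf A d p) (\<lambda>\<omega>. \<bar>\<Sum>j\<in>B. (h j (\<omega> j) c - m j c)\<bar>) \<le> sqrt (\<Sum>j\<in>B. m j c)" for c
  proof -
    have "measure_pmf.expectation (Pi_pmf A d p) (\<lambda>\<omega>. \<bar>\<Sum>j\<in>B. (h j (\<omega> j) c - m j c)\<bar>)
       = measure_pmf.expectation (Pi_pmf A d p) (\<lambda>\<omega>. \<bar>\<Sum>j\<in>A. g c j (\<omega> j)\<bar>)"
      by (simp only: eqsum)
    also have "\<dots> \<le> sqrt (measure_pmf.expectation (Pi_pmf A d p) (\<lambda>\<omega>. (\<Sum>j\<in>A. g c j (\<omega> j))^2))"
      by (rule exp_abs_le_sqrt[OF Zb])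
    also have "measure_pmf.expectation (Pi_pmf A d p) (\<lambda>\<omega>. (\<Sum>j\<in>A. g c j (\<omega> j))^2)
        = (\<Sum>j\<in>A. measure_pmf.expectation (p j) (\<lambda>y. (g c j y)^2))"
      by (rule Pi_var[OF A(1) gb gmean])
    also have "\<dots> \<le> (\<Sum>j\<in>A. if j \<in> B then m j c else 0)"
      by (rule sum_mono) (rule var_le)
    also have "\<dots> = (\<Sum>j\<in>B. m j c)"
      using A by (simp add: sum.If_cases Int_absorb1)
    finally show ?thesis by simp
  qed
  have "measure_pmf.expectation (Pi_pmf A d p)
           (\<lambda>\<omega>. \<Sum>c\<in>UNIV. \<bar>\<Sum>j\<in>B. (h j (\<omega> j) c - m j c)\<bar>)
       = (\<Sum>c\<in>UNIV. measure_pmf.expectation (Pi_pmf A d p) (\<lambda>\<omega>. \<bar>\<Sum>j\<in>B. (h j (\<omega> j) c - m j c)\<bar>))"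
  proof (rule Bochner_Integration.integral_sum)
    fix c
    show "integrable (measure_pmf (Pi_pmf A d p)) (\<lambda>\<omega>. \<bar>\<Sum>j\<in>B. (h j (\<omega> j) c - m j c)\<bar>)"
      by (rule exp_bound[where B="real (card A) * 1"]) (simp only: eqsum abs_abs Zb)
  qed
  also have "\<dots> \<le> (\<Sum>c\<in>UNIV. sqrt (\<Sum>j\<in>B. m j c))"
    by (rule sum_mono) (rule each)
  also have "\<dots> \<le> sqrt (real (card (UNIV::'c set)) * (\<Sum>c\<in>UNIV. \<Sum>j\<in>B. m j c))"
    by (rule sum_sqrt_le) (simp add: sum_nonneg m01)
  also have "(\<Sum>c\<in>UNIV. \<Sum>j\<in>B. m j c) = real (card B)"
  proof -
    have "(\<Sum>c\<in>UNIV. \<Sum>j\<in>B. m j c) = (\<Sum>j\<in>B. \<Sum>c\<in>UNIV. m j c)" by (rule sum.swap)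
    also have "\<dots> = (\<Sum>j\<in>B. 1)"
    proof (rule sum.cong[OF refl])
      fix j
      have "(\<Sum>c\<in>UNIV. m j c) = measure_pmf.expectation (p j) (\<lambda>y. \<Sum>c\<in>UNIV. h j y c)"
        unfolding m_def
        by (rule Bochner_Integration.integral_sum[symmetric])
           (rule exp_bound[where B=1], simp add: abs_le_iff h0 hle order_trans[OF _ h0])
      also have "\<dots> = 1" by (simp add: h1)
      finally show "(\<Sum>c\<in>UNIV. m j c) = 1" .
    qed
    finally show ?thesis by simp
  qed
  finally show ?thesis unfolding m_def by simp
qed

lemma agents_eq: "agents K N = Sigma {..<K} (\<lambda>k. {..<N k})"
  by (auto simp: agents_def)

lemma finite_agents[simp]: "finite (agents K N)"
  unfolding agents_eq by auto

lemma card_filter_real: "real (card {j. j < (n::nat) \<and> P j}) = (\<Sum>j<n. if P j then 1 else 0)"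
proof -
  have e: "{j. j < n \<and> P j} = {j\<in>{..<n}. P j}" by auto
  have "(\<Sum>j<n. if P j then 1 else 0) = (\<Sum>j\<in>{j\<in>{..<n}. P j}. (1::real))"
    by (rule sum.inter_filter[symmetric]) simp
  then show ?thesis unfolding e by simp
qed

lemma if01_mult: "(if c then 1 else 0) * (a::real) = (if c then a else 0)" by simp

lemma emp_sum: "k < K \<Longrightarrow> emp K N s x k = (\<Sum>j<N k. if s (k, j) = x then 1 else 0) / real (N k)"
  unfolding emp_def by (simp add: card_filter_real)

lemma emp_lin:
  fixes s :: "nat \<times> nat \<Rightarrow> 'a::finite"
  assumes "k < K"
  shows "(\<Sum>x\<in>UNIV. emp K N s x k * f x) = (\<Sum>j<N k. f (s (k, j))) / real (N k)"
proof -
  have "(\<Sum>x\<in>UNIV. emp K N s x k * f x) = (\<Sum>x\<in>UNIV. (\<Sum>j<N k. (if s (k, j) = x then 1 else 0)) * f x / real (N k))"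
    using assms by (simp add: emp_sum)
  also have "\<dots> = (\<Sum>x\<in>UNIV. \<Sum>j<N k. (if s (k, j) = x then 1 else 0) * f x) / real (N k)"
    by (simp add: sum_divide_distrib sum_distrib_right)
  also have "\<dots> = (\<Sum>j<N k. \<Sum>x\<in>UNIV. (if s (k, j) = x then 1 else 0) * f x) / real (N k)"
    by (subst sum.swap) simp
  also have "\<dots> = (\<Sum>j<N k. f (s (k, j))) / real (N k)"
    by (simp only: if01_mult) (simp add: sum.delta')
  finally show ?thesis .
qed

lemma emp_PK:
  fixes s :: "nat \<times> nat \<Rightarrow> 'a::finite"
  assumes "\<forall>k<K. 1 \<le> N k"
  shows "emp K N s \<in> PK K"
proof -
  have "(\<Sum>x\<in>UNIV. emp K N s x k) = 1" if "k < K" for k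
  proof -
    have "(\<Sum>x\<in>UNIV. emp K N s x k) = (\<Sum>x\<in>UNIV. emp K N s x k * 1)" by simp
    also have "\<dots> = (\<Sum>j<N k. 1) / real (N k)" by (rule emp_lin[OF that])
    also have "\<dots> = 1" using assms that by auto
    finally show ?thesis .
  qed
  then show ?thesis unfolding PK_def by (auto simp: emp_def)
qed

lemma finite_set_Pi_pmf:
  fixes p :: "'j \<Rightarrow> 'b::finite pmf"
  assumes "finite A"
  shows "finite (set_pmf (Pi_pmf A d p))"
  by (rule finite_subset[OF set_Pi_pmf_subset'[OF assms]]) (intro finite_PiE_dflt assms, simp)

lemma fin_action[simp]: "finite (set_pmf (action_pmf K N (pol::nat \<Rightarrow> nat \<Rightarrow> 'x::finite \<Rightarrow> _ \<Rightarrow> 'u::finite pmf) t s))"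
  unfolding action_pmf_def by (rule finite_set_Pi_pmf) simp

lemma fin_next[simp]: "finite (set_pmf (next_pmf K N (P :: nat \<Rightarrow> 'x::finite \<Rightarrow> 'u::finite \<Rightarrow> _ \<Rightarrow> _ \<Rightarrow> 'x pmf) s a))"
  unfolding next_pmf_def by (rule finite_set_Pi_pmf) simp

lemma fin_state[simp]:
  "finite (set_pmf (state_dist K N (pol::nat \<Rightarrow> nat \<Rightarrow> 'x::finite \<Rightarrow> _ \<Rightarrow> 'u::finite pmf) P x0 t))"
  by (induction t) auto

lemma fin_sa[simp]:
  "finite (set_pmf (sa_dist K N (pol::nat \<Rightarrow> nat \<Rightarrow> 'x::finite \<Rightarrow> _ \<Rightarrow> 'u::finite pmf) P x0 t))"
  unfolding sa_dist_def by auto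

lemma fin_integrable[simp]: "finite (set_pmf M) \<Longrightarrow> integrable (measure_pmf M) (f :: _ \<Rightarrow> real)"
  by (rule integrable_measure_pmf_finite)

lemma fin_mono:
  fixes f g :: "'a \<Rightarrow> real"
  assumes "finite (set_pmf M)" "\<And>x. x \<in> set_pmf M \<Longrightarrow> f x \<le> g x"
  shows "measure_pmf.expectation M f \<le> measure_pmf.expectation M g"
  by (rule integral_mono_AE) (use assms in \<open>auto simp: AE_measure_pmf_iff\<close>)

lemma exp_bind_fin:
  fixes f :: "'b \<Rightarrow> real"
  assumes "finite (set_pmf M)" "\<And>x. x \<in> set_pmf M \<Longrightarrow> finite (set_pmf (N x))"
  shows "measure_pmf.expectation (bind_pmf M N) f = measure_pmf.expectation M (\<lambda>x. measure_pmf.expectation (N x) f)"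
proof -
  have "measure_pmf.expectation (bind_pmf M N) f = (\<Sum>a\<in>set_pmf M. pmf M a *\<^sub>R measure_pmf.expectation (N a) f)"
    by (rule pmf_expectation_bind) (use assms in auto)
  also have "\<dots> = measure_pmf.expectation M (\<lambda>x. measure_pmf.expectation (N x) f)"
    by (rule integral_measure_pmf[symmetric]) (use assms in auto)
  finally show ?thesis .
qed

lemma exp_indicator: "measure_pmf.expectation p (\<lambda>y. if y = u then 1 else 0) = pmf p u"
  by (subst integral_measure_pmf_real[where A="{u}"]) (auto split: if_splits)

lemma exp_finite_type:
  fixes f :: "'b::finite \<Rightarrow> real"
  shows "measure_pmf.expectation p f = (\<Sum>y\<in>UNIV. pmf p y * f y)"
  by (subst integral_measure_pmf_real[where A=UNIV]) (auto simp: mult.commute)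

lemma sum_pmf_UNIV: "(\<Sum>u\<in>UNIV. pmf (p :: 'u::finite pmf) u) = 1"
  by (rule sum_pmf_eq_1) auto

lemma pt3:
  fixes m1 m2 p1 p2 a b :: real
  assumes "0 \<le> m2" "0 \<le> p1" "0 \<le> p2"
  shows "\<bar>m1 * p1 * a - m2 * p2 * b\<bar> \<le> \<bar>m1 - m2\<bar> * p1 * \<bar>a\<bar> + m2 * \<bar>p1 - p2\<bar> * \<bar>a\<bar> + m2 * p2 * \<bar>a - b\<bar>"
proof -
  have "m1 * p1 * a - m2 * p2 * b = (m1 - m2) * p1 * a + m2 * (p1 - p2) * a + m2 * p2 * (a - b)"
    by (simp add: algebra_simps)
  also have "\<bar>\<dots>\<bar> \<le> \<bar>(m1 - m2) * p1 * a\<bar> + \<bar>m2 * (p1 - p2) * a\<bar> + \<bar>m2 * p2 * (a - b)\<bar>"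
    by (rule order_trans[OF abs_triangle_ineq add_right_mono[OF abs_triangle_ineq]])
  also have "\<dots> = \<bar>m1 - m2\<bar> * p1 * \<bar>a\<bar> + m2 * \<bar>p1 - p2\<bar> * \<bar>a\<bar> + m2 * p2 * \<bar>a - b\<bar>"
    using assms by (simp add: abs_mult)
  finally show ?thesis .
qed

lemma three_term:
  fixes m1 m2 :: "'x::finite \<Rightarrow> real" and q1 q2 :: "'x \<Rightarrow> 'u::finite pmf"
    and f1 f2 :: "'x \<Rightarrow> 'u \<Rightarrow> 'c::finite \<Rightarrow> real"
  assumes m2: "\<And>x. 0 \<le> m2 x" "(\<Sum>x\<in>UNIV. m2 x) = 1"
    and F: "\<And>x u. (\<Sum>c\<in>UNIV. \<bar>f1 x u c\<bar>) \<le> F"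
    and G: "\<And>x u. (\<Sum>c\<in>UNIV. \<bar>f1 x u c - f2 x u c\<bar>) \<le> G"
  shows "(\<Sum>c\<in>UNIV. \<bar>\<Sum>x\<in>UNIV. \<Sum>u\<in>UNIV. m1 x * pmf (q1 x) u * f1 x u c - m2 x * pmf (q2 x) u * f2 x u c\<bar>)
     \<le> F * (\<Sum>x\<in>UNIV. \<bar>m1 x - m2 x\<bar>) + F * (\<Sum>x\<in>UNIV. m2 x * l1pmf (q1 x) (q2 x)) + G"
proof -
  have "(\<Sum>c\<in>UNIV. \<bar>\<Sum>x\<in>UNIV. \<Sum>u\<in>UNIV. m1 x * pmf (q1 x) u * f1 x u c - m2 x * pmf (q2 x) u * f2 x u c\<bar>)
      \<le> (\<Sum>c\<in>UNIV. \<Sum>x\<in>UNIV. \<Sum>u\<in>UNIV. \<bar>m1 x * pmf (q1 x) u * f1 x u c - m2 x * pmf (q2 x) u * f2 x u c\<bar>)"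
    by (rule sum_mono, rule order_trans[OF sum_abs], rule sum_mono, rule sum_abs)
  also have "\<dots> = (\<Sum>x\<in>UNIV. \<Sum>u\<in>UNIV. \<Sum>c\<in>UNIV. \<bar>m1 x * pmf (q1 x) u * f1 x u c - m2 x * pmf (q2 x) u * f2 x u c\<bar>)"
    by (subst sum.swap) (rule sum.cong[OF refl], rule sum.swap)
  also have "\<dots> \<le> (\<Sum>x\<in>UNIV. \<Sum>u\<in>UNIV. \<bar>m1 x - m2 x\<bar> * pmf (q1 x) u * F + m2 x * \<bar>pmf (q1 x) u - pmf (q2 x) u\<bar> * F
                      + m2 x * pmf (q2 x) u * G)"
  proof (intro sum_mono)
    fix x u
    have "(\<Sum>c\<in>UNIV. \<bar>m1 x * pmf (q1 x) u * f1 x u c - m2 x * pmf (q2 x) u * f2 x u c\<bar>)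
       \<le> (\<Sum>c\<in>UNIV. \<bar>m1 x - m2 x\<bar> * pmf (q1 x) u * \<bar>f1 x u c\<bar> + m2 x * \<bar>pmf (q1 x) u - pmf (q2 x) u\<bar> * \<bar>f1 x u c\<bar>
                      + m2 x * pmf (q2 x) u * \<bar>f1 x u c - f2 x u c\<bar>)"
      by (intro sum_mono pt3) (auto simp: m2)
    also have "\<dots> = \<bar>m1 x - m2 x\<bar> * pmf (q1 x) u * (\<Sum>c\<in>UNIV. \<bar>f1 x u c\<bar>) + m2 x * \<bar>pmf (q1 x) u - pmf (q2 x) u\<bar> * (\<Sum>c\<in>UNIV. \<bar>f1 x u c\<bar>)
                      + m2 x * pmf (q2 x) u * (\<Sum>c\<in>UNIV. \<bar>f1 x u c - f2 x u c\<bar>)"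
      by (simp add: sum.distrib sum_distrib_left)
    also have "\<dots> \<le> \<bar>m1 x - m2 x\<bar> * pmf (q1 x) u * F + m2 x * \<bar>pmf (q1 x) u - pmf (q2 x) u\<bar> * F
                      + m2 x * pmf (q2 x) u * G"
      by (intro add_mono mult_left_mono F G) (auto simp: m2)
    finally show "(\<Sum>c\<in>UNIV. \<bar>m1 x * pmf (q1 x) u * f1 x u c - m2 x * pmf (q2 x) u * f2 x u c\<bar>)
       \<le> \<bar>m1 x - m2 x\<bar> * pmf (q1 x) u * F + m2 x * \<bar>pmf (q1 x) u - pmf (q2 x) u\<bar> * F
                      + m2 x * pmf (q2 x) u * G" .
  qed
  also have "\<dots> = (\<Sum>x\<in>UNIV. \<bar>m1 x - m2 x\<bar> * F + m2 x * l1pmf (q1 x) (q2 x) * F + m2 x * G)"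
  proof (rule sum.cong[OF refl])
    fix x
    have "(\<Sum>u\<in>UNIV. \<bar>m1 x - m2 x\<bar> * pmf (q1 x) u * F + m2 x * \<bar>pmf (q1 x) u - pmf (q2 x) u\<bar> * F
                      + m2 x * pmf (q2 x) u * G)
       = \<bar>m1 x - m2 x\<bar> * (\<Sum>u\<in>UNIV. pmf (q1 x) u) * F + m2 x * (\<Sum>u\<in>UNIV. \<bar>pmf (q1 x) u - pmf (q2 x) u\<bar>) * F
                      + m2 x * (\<Sum>u\<in>UNIV. pmf (q2 x) u) * G"
      by (simp add: sum.distrib sum_distrib_left[symmetric] sum_distrib_right[symmetric] mult.assoc mult.commute mult.left_commute)
    then show "(\<Sum>u\<in>UNIV. \<bar>m1 x - m2 x\<bar> * pmf (q1 x) u * F + m2 x * \<bar>pmf (q1 x) u - pmf (q2 x) u\<bar> * F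
                      + m2 x * pmf (q2 x) u * G) = \<bar>m1 x - m2 x\<bar> * F + m2 x * l1pmf (q1 x) (q2 x) * F + m2 x * G"
      by (simp add: sum_pmf_UNIV l1pmf_def)
  qed
  also have "\<dots> = F * (\<Sum>x\<in>UNIV. \<bar>m1 x - m2 x\<bar>) + F * (\<Sum>x\<in>UNIV. m2 x * l1pmf (q1 x) (q2 x)) + G * (\<Sum>x\<in>UNIV. m2 x)"
    by (simp add: sum.distrib sum_distrib_left[symmetric] sum_distrib_right[symmetric] mult.commute)
  finally show ?thesis using m2 by simp
qed

locale mfl =
  fixes K :: nat and N :: "nat \<Rightarrow> nat" and MR LR LP LQ :: real
    and P :: "nat \<Rightarrow> 'x::finite \<Rightarrow> 'u::finite \<Rightarrow> ('x \<Rightarrow> nat \<Rightarrow> real) \<Rightarrow> ('u \<Rightarrow> nat \<Rightarrow> real) \<Rightarrow> 'x pmf"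
    and r :: "nat \<Rightarrow> 'x \<Rightarrow> 'u \<Rightarrow> ('x \<Rightarrow> nat \<Rightarrow> real) \<Rightarrow> ('u \<Rightarrow> nat \<Rightarrow> real) \<Rightarrow> real"
    and pol :: "nat \<Rightarrow> nat \<Rightarrow> 'x \<Rightarrow> ('x \<Rightarrow> nat \<Rightarrow> real) \<Rightarrow> 'u pmf"
  assumes N_pos: "\<forall>k<K. 1 \<le> N k"
    and consts_nn: "0 \<le> MR" "0 \<le> LR" "0 \<le> LP" "0 \<le> LQ"
    and r_bound: "\<forall>k<K. \<forall>x u \<mu> \<nu>. \<mu> \<in> PK K \<longrightarrow> \<nu> \<in> PK K \<longrightarrow> \<bar>r k x u \<mu> \<nu>\<bar> \<le> MR"
    and r_lip: "\<forall>k<K. \<forall>x u \<mu>1 \<mu>2 \<nu>1 \<nu>2. \<mu>1 \<in> PK K \<longrightarrow> \<mu>2 \<in> PK K \<longrightarrow> \<nu>1 \<in> PK K \<longrightarrow> \<nu>2 \<in> PK K \<longrightarrow>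
                 \<bar>r k x u \<mu>1 \<nu>1 - r k x u \<mu>2 \<nu>2\<bar> \<le> LR * (l1K K \<mu>1 \<mu>2 + l1K K \<nu>1 \<nu>2)"
    and P_lip: "\<forall>k<K. \<forall>x u \<mu>1 \<mu>2 \<nu>1 \<nu>2. \<mu>1 \<in> PK K \<longrightarrow> \<mu>2 \<in> PK K \<longrightarrow> \<nu>1 \<in> PK K \<longrightarrow> \<nu>2 \<in> PK K \<longrightarrow>
                 l1pmf (P k x u \<mu>1 \<nu>1) (P k x u \<mu>2 \<nu>2) \<le> LP * (l1K K \<mu>1 \<mu>2 + l1K K \<nu>1 \<nu>2)"
    and pol_lip: "\<forall>t. \<forall>k<K. \<forall>x \<mu>1 \<mu>2. \<mu>1 \<in> PK K \<longrightarrow> \<mu>2 \<in> PK K \<longrightarrow>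
                 l1pmf (pol t k x \<mu>1) (pol t k x \<mu>2) \<le> LQ * l1K K \<mu>1 \<mu>2"
begin

lemma PK_D:
  assumes "\<mu> \<in> PK K"
  shows "\<And>x k. K \<le> k \<Longrightarrow> \<mu> x k = 0" "\<And>x k. k < K \<Longrightarrow> 0 \<le> \<mu> x k" "\<And>k. k < K \<Longrightarrow> (\<Sum>x\<in>UNIV. \<mu> x k) = 1"
  using assms unfolding PK_def by auto

lemma nuMF_PK:
  fixes pt :: "nat \<Rightarrow> 'a::finite \<Rightarrow> ('a \<Rightarrow> nat \<Rightarrow> real) \<Rightarrow> 'b::finite pmf"
  assumes "\<mu> \<in> PK K"
  shows "nuMF pt \<mu> \<in> PK K"
proof -
  have "(\<Sum>u\<in>UNIV. nuMF pt \<mu> u k) = 1" if "k < K" for k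
  proof -
    have "(\<Sum>u\<in>UNIV. nuMF pt \<mu> u k) = (\<Sum>x\<in>UNIV. (\<Sum>u\<in>UNIV. pmf (pt k x \<mu>) u) * \<mu> x k)"
      unfolding nuMF_def by (subst sum.swap) (simp add: sum_distrib_right)
    also have "\<dots> = 1" using PK_D(3)[OF assms that] by (simp add: sum_pmf_UNIV)
    finally show ?thesis .
  qed
  moreover have "nuMF pt \<mu> u k = 0" if "K \<le> k" for u k
    unfolding nuMF_def using PK_D(1)[OF assms that] by simp
  moreover have "0 \<le> nuMF pt \<mu> u k" if "k < K" for u k
    unfolding nuMF_def using PK_D(2)[OF assms that] by (simp add: sum_nonneg)
  ultimately show ?thesis unfolding PK_def by auto
qed

lemma PMF_PK:
  fixes pt :: "nat \<Rightarrow> 'x \<Rightarrow> ('x \<Rightarrow> nat \<Rightarrow> real) \<Rightarrow> 'u pmf"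
  assumes "\<mu> \<in> PK K"
  shows "PMF P pt \<mu> \<in> PK K"
proof -
  have "(\<Sum>y\<in>UNIV. PMF P pt \<mu> y k) = 1" if "k < K" for k
  proof -
    have "(\<Sum>y\<in>UNIV. PMF P pt \<mu> y k) = (\<Sum>x\<in>UNIV. \<Sum>u\<in>UNIV. \<Sum>y\<in>UNIV. \<mu> x k * pmf (pt k x \<mu>) u * pmf (P k x u \<mu> (nuMF pt \<mu>)) y)"
      unfolding PMF_def by (subst sum.swap) (rule sum.cong[OF refl], rule sum.swap)
    also have "\<dots> = (\<Sum>x\<in>UNIV. \<Sum>u\<in>UNIV. \<mu> x k * pmf (pt k x \<mu>) u)"
      by (simp add: sum_distrib_left[symmetric] sum_pmf_UNIV)
    also have "\<dots> = (\<Sum>x\<in>UNIV. \<mu> x k)"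
      by (simp add: sum_distrib_left[symmetric] sum_pmf_UNIV)
    also have "\<dots> = 1" using PK_D(3)[OF assms that] .
    finally show ?thesis .
  qed
  moreover have "PMF P pt \<mu> y k = 0" if "K \<le> k" for y k
    unfolding PMF_def using PK_D(1)[OF assms that] by simp
  moreover have "0 \<le> PMF P pt \<mu> y k" if "k < K" for y k
    unfolding PMF_def using PK_D(2)[OF assms that] by (simp add: sum_nonneg)
  ultimately show ?thesis unfolding PK_def by auto
qed

lemma mu_traj_PK: "\<mu>0 \<in> PK K \<Longrightarrow> mu_traj P pol \<mu>0 t \<in> PK K"
  by (induction t) (auto intro: PMF_PK)

lemma l1K_nuMF:
  assumes "\<mu>1 \<in> PK K" "\<mu>2 \<in> PK K"
  shows "l1K K (nuMF (pol t) \<mu>1) (nuMF (pol t) \<mu>2) \<le> (1 + real K * LQ) * l1K K \<mu>1 \<mu>2"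
proof -
  have cls: "(\<Sum>u\<in>UNIV. \<bar>nuMF (pol t) \<mu>1 u k - nuMF (pol t) \<mu>2 u k\<bar>)
      \<le> (\<Sum>x\<in>UNIV. \<bar>\<mu>1 x k - \<mu>2 x k\<bar>) + LQ * l1K K \<mu>1 \<mu>2" if k: "k < K" for k
  proof -
    have "(\<Sum>u\<in>UNIV. \<bar>nuMF (pol t) \<mu>1 u k - nuMF (pol t) \<mu>2 u k\<bar>)
       = (\<Sum>c\<in>UNIV. \<bar>\<Sum>x\<in>UNIV. \<Sum>u\<in>UNIV. \<mu>1 x k * pmf (pol t k x \<mu>1) u * (if u = c then 1 else 0)
             - \<mu>2 x k * pmf (pol t k x \<mu>2) u * (if u = c then 1 else 0)\<bar>)"
      unfolding nuMF_def by (simp add: sum_subtractf[symmetric] mult.commute if_distrib cong: if_cong)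
    also have "\<dots> \<le> 1 * (\<Sum>x\<in>UNIV. \<bar>\<mu>1 x k - \<mu>2 x k\<bar>) + 1 * (\<Sum>x\<in>UNIV. \<mu>2 x k * l1pmf (pol t k x \<mu>1) (pol t k x \<mu>2)) + 0"
      by (rule three_term) (auto simp: PK_D[OF assms(2)] k)
    also have "(\<Sum>x\<in>UNIV. \<mu>2 x k * l1pmf (pol t k x \<mu>1) (pol t k x \<mu>2)) \<le> (\<Sum>x\<in>UNIV. \<mu>2 x k * (LQ * l1K K \<mu>1 \<mu>2))"
      using pol_lip assms k by (intro sum_mono mult_left_mono) (auto simp: PK_D[OF assms(2)])
    also have "\<dots> = LQ * l1K K \<mu>1 \<mu>2"
      by (simp add: sum_distrib_right[symmetric] PK_D(3)[OF assms(2) k])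
    finally show ?thesis by simp
  qed
  have "l1K K (nuMF (pol t) \<mu>1) (nuMF (pol t) \<mu>2) \<le> (\<Sum>k<K. (\<Sum>x\<in>UNIV. \<bar>\<mu>1 x k - \<mu>2 x k\<bar>) + LQ * l1K K \<mu>1 \<mu>2)"
    unfolding l1K_def[of K "nuMF _ _"] by (rule sum_mono) (simp add: cls)
  also have "\<dots> = (1 + real K * LQ) * l1K K \<mu>1 \<mu>2"
    by (simp add: sum.distrib l1K_def algebra_simps)
  finally show ?thesis .
qed

definition cK where "cK = LQ + LP * (2 + real K * LQ)"

lemma nu_diff:
  assumes "\<mu>1 \<in> PK K" "\<mu>2 \<in> PK K"
  shows "l1K K \<mu>1 \<mu>2 + l1K K (nuMF (pol t) \<mu>1) (nuMF (pol t) \<mu>2) \<le> (2 + real K * LQ) * l1K K \<mu>1 \<mu>2"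
  using l1K_nuMF[OF assms, of t] by (simp add: algebra_simps)

lemma l1K_nonneg: "0 \<le> l1K K \<mu>1 \<mu>2"
  unfolding l1K_def by (simp add: sum_nonneg)

lemma PMF_class:
  assumes "\<mu>1 \<in> PK K" "\<mu>2 \<in> PK K" and k: "k < K"
  shows "(\<Sum>y\<in>UNIV. \<bar>PMF P (pol t) \<mu>1 y k - PMF P (pol t) \<mu>2 y k\<bar>)
      \<le> (\<Sum>x\<in>UNIV. \<bar>\<mu>1 x k - \<mu>2 x k\<bar>) + cK * l1K K \<mu>1 \<mu>2"
proof -
  let ?n1 = "nuMF (pol t) \<mu>1" and ?n2 = "nuMF (pol t) \<mu>2"
  have G: "(\<Sum>c\<in>UNIV. \<bar>pmf (P k x u \<mu>1 ?n1) c - pmf (P k x u \<mu>2 ?n2) c\<bar>) \<le> LP * (l1K K \<mu>1 \<mu>2 + l1K K ?n1 ?n2)" for x u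
    using P_lip k assms nuMF_PK[OF assms(1)] nuMF_PK[OF assms(2)] unfolding l1pmf_def by blast
  have "(\<Sum>y\<in>UNIV. \<bar>PMF P (pol t) \<mu>1 y k - PMF P (pol t) \<mu>2 y k\<bar>)
      = (\<Sum>c\<in>UNIV. \<bar>\<Sum>x\<in>UNIV. \<Sum>u\<in>UNIV. \<mu>1 x k * pmf (pol t k x \<mu>1) u * pmf (P k x u \<mu>1 ?n1) c
             - \<mu>2 x k * pmf (pol t k x \<mu>2) u * pmf (P k x u \<mu>2 ?n2) c\<bar>)"
    unfolding PMF_def by (simp add: sum_subtractf[symmetric])
  also have "\<dots> \<le> 1 * (\<Sum>x\<in>UNIV. \<bar>\<mu>1 x k - \<mu>2 x k\<bar>) + 1 * (\<Sum>x\<in>UNIV. \<mu>2 x k * l1pmf (pol t k x \<mu>1) (pol t k x \<mu>2))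
       + LP * (l1K K \<mu>1 \<mu>2 + l1K K ?n1 ?n2)"
    by (rule three_term) (auto simp: PK_D[OF assms(2)] k sum_pmf_UNIV intro: G)
  also have "(\<Sum>x\<in>UNIV. \<mu>2 x k * l1pmf (pol t k x \<mu>1) (pol t k x \<mu>2)) \<le> (\<Sum>x\<in>UNIV. \<mu>2 x k * (LQ * l1K K \<mu>1 \<mu>2))"
    using pol_lip assms k by (intro sum_mono mult_left_mono) (auto simp: PK_D[OF assms(2)])
  also have "\<dots> = LQ * l1K K \<mu>1 \<mu>2"
    by (simp add: sum_distrib_right[symmetric] PK_D(3)[OF assms(2) k])
  also have "LP * (l1K K \<mu>1 \<mu>2 + l1K K ?n1 ?n2) \<le> LP * ((2 + real K * LQ) * l1K K \<mu>1 \<mu>2)"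
    by (rule mult_left_mono[OF nu_diff[OF assms(1,2)] consts_nn(3)])
  finally show ?thesis by (simp add: cK_def algebra_simps)
qed

lemma rMF_class:
  assumes "\<mu>1 \<in> PK K" "\<mu>2 \<in> PK K" and k: "k < K"
  shows "\<bar>rMF r (pol t) \<mu>1 k - rMF r (pol t) \<mu>2 k\<bar>
      \<le> MR * (\<Sum>x\<in>UNIV. \<bar>\<mu>1 x k - \<mu>2 x k\<bar>) + (MR * LQ + LR * (2 + real K * LQ)) * l1K K \<mu>1 \<mu>2"
proof -
  let ?n1 = "nuMF (pol t) \<mu>1" and ?n2 = "nuMF (pol t) \<mu>2"
  have G: "\<bar>r k x u \<mu>1 ?n1 - r k x u \<mu>2 ?n2\<bar> \<le> LR * (l1K K \<mu>1 \<mu>2 + l1K K ?n1 ?n2)" for x u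
    using r_lip k assms nuMF_PK[OF assms(1)] nuMF_PK[OF assms(2)] by blast
  have F: "\<bar>r k x u \<mu>1 ?n1\<bar> \<le> MR" for x u
    using r_bound k assms nuMF_PK[OF assms(1)] by blast
  have "\<bar>rMF r (pol t) \<mu>1 k - rMF r (pol t) \<mu>2 k\<bar>
      = (\<Sum>c\<in>(UNIV::unit set). \<bar>\<Sum>x\<in>UNIV. \<Sum>u\<in>UNIV. \<mu>1 x k * pmf (pol t k x \<mu>1) u * (\<lambda>x u c. r k x u \<mu>1 ?n1) x u c
             - \<mu>2 x k * pmf (pol t k x \<mu>2) u * (\<lambda>x u c. r k x u \<mu>2 ?n2) x u c\<bar>)"
    unfolding rMF_def by (simp add: sum_subtractf[symmetric])
  also have "\<dots> \<le> MR * (\<Sum>x\<in>UNIV. \<bar>\<mu>1 x k - \<mu>2 x k\<bar>) + MR * (\<Sum>x\<in>UNIV. \<mu>2 x k * l1pmf (pol t k x \<mu>1) (pol t k x \<mu>2))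
       + LR * (l1K K \<mu>1 \<mu>2 + l1K K ?n1 ?n2)"
    by (rule three_term) (auto simp: PK_D[OF assms(2)] k intro: G F)
  finally have T: "\<bar>rMF r (pol t) \<mu>1 k - rMF r (pol t) \<mu>2 k\<bar> \<le> MR * (\<Sum>x\<in>UNIV. \<bar>\<mu>1 x k - \<mu>2 x k\<bar>) + MR * (\<Sum>x\<in>UNIV. \<mu>2 x k * l1pmf (pol t k x \<mu>1) (pol t k x \<mu>2))
       + LR * (l1K K \<mu>1 \<mu>2 + l1K K ?n1 ?n2)" .
  have "(\<Sum>x\<in>UNIV. \<mu>2 x k * l1pmf (pol t k x \<mu>1) (pol t k x \<mu>2)) \<le> (\<Sum>x\<in>UNIV. \<mu>2 x k * (LQ * l1K K \<mu>1 \<mu>2))"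
    using pol_lip assms k by (intro sum_mono mult_left_mono) (auto simp: PK_D[OF assms(2)])
  also have "\<dots> = LQ * l1K K \<mu>1 \<mu>2"
    by (simp add: sum_distrib_right[symmetric] PK_D(3)[OF assms(2) k])
  finally have B: "MR * (\<Sum>x\<in>UNIV. \<mu>2 x k * l1pmf (pol t k x \<mu>1) (pol t k x \<mu>2)) \<le> MR * (LQ * l1K K \<mu>1 \<mu>2)"
    by (rule mult_left_mono[OF _ consts_nn(1)])
  have C: "LR * (l1K K \<mu>1 \<mu>2 + l1K K ?n1 ?n2) \<le> LR * ((2 + real K * LQ) * l1K K \<mu>1 \<mu>2)"
    by (rule mult_left_mono[OF nu_diff[OF assms(1,2)] consts_nn(2)])
  have "MR * (LQ * l1K K \<mu>1 \<mu>2) + LR * ((2 + real K * LQ) * l1K K \<mu>1 \<mu>2) = (MR * LQ + LR * (2 + real K * LQ)) * l1K K \<mu>1 \<mu>2"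
    by (simp add: algebra_simps)
  then show ?thesis using T B C by linarith
qed
end

lemma exp_const[simp]: "measure_pmf.expectation p (\<lambda>_. c) = (c::real)"
  by (simp add: measure_pmf.prob_space_axioms prob_space.prob_space)

lemma exp_abs_le: "\<bar>measure_pmf.expectation p (f::_\<Rightarrow>real)\<bar> \<le> measure_pmf.expectation p (\<lambda>x. \<bar>f x\<bar>)"
  using integral_norm_bound[of p f] by simp

lemma class_conc:
  fixes p :: "nat \<times> nat \<Rightarrow> 'b pmf" and h :: "nat \<times> nat \<Rightarrow> 'b \<Rightarrow> 'c::finite \<Rightarrow> real"
  assumes k: "k < K" and n: "1 \<le> N k"
    and h0: "\<And>j y c. 0 \<le> h j y c" and h1: "\<And>j y. (\<Sum>c\<in>UNIV. h j y c) = 1"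
  shows "measure_pmf.expectation (Pi_pmf (agents K N) d p)
      (\<lambda>\<omega>. \<Sum>c\<in>UNIV. \<bar>(\<Sum>j<N k. h (k,j) (\<omega> (k,j)) c) / real (N k)
           - (\<Sum>j<N k. measure_pmf.expectation (p (k,j)) (\<lambda>y. h (k,j) y c)) / real (N k)\<bar>)
    \<le> sqrt (real CARD('c)) / sqrt (real (N k))"
proof -
  define B where "B = (\<lambda>j. (k, j)) ` {..<N k}"
  have BA: "B \<subseteq> agents K N" unfolding B_def agents_def using k by auto
  have inj: "inj_on (\<lambda>j. (k, j)) {..<N k}" by (auto simp: inj_on_def)
  have cB: "card B = N k" unfolding B_def by (simp add: card_image[OF inj])
  have npos: "0 < real (N k)" using n by simp
  have pw: "(\<Sum>c\<in>UNIV. \<bar>(\<Sum>j<N k. h (k,j) (\<omega> (k,j)) c) / real (N k)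
           - (\<Sum>j<N k. measure_pmf.expectation (p (k,j)) (\<lambda>y. h (k,j) y c)) / real (N k)\<bar>)
     = (\<Sum>c\<in>UNIV. \<bar>\<Sum>i\<in>B. (h i (\<omega> i) c - measure_pmf.expectation (p i) (\<lambda>y. h i y c))\<bar>) / real (N k)" for \<omega>
  proof -
    have "(\<Sum>i\<in>B. (h i (\<omega> i) c - measure_pmf.expectation (p i) (\<lambda>y. h i y c)))
        = (\<Sum>j<N k. h (k,j) (\<omega> (k,j)) c) - (\<Sum>j<N k. measure_pmf.expectation (p (k,j)) (\<lambda>y. h (k,j) y c))" for c
      unfolding B_def by (simp add: sum.reindex[OF inj] sum_subtractf)
    then show ?thesis using npos
      by (simp add: sum_divide_distrib[symmetric] diff_divide_distrib[symmetric])
  qed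
  have "measure_pmf.expectation (Pi_pmf (agents K N) d p)
      (\<lambda>\<omega>. \<Sum>c\<in>UNIV. \<bar>(\<Sum>j<N k. h (k,j) (\<omega> (k,j)) c) / real (N k)
           - (\<Sum>j<N k. measure_pmf.expectation (p (k,j)) (\<lambda>y. h (k,j) y c)) / real (N k)\<bar>)
     = measure_pmf.expectation (Pi_pmf (agents K N) d p)
      (\<lambda>\<omega>. \<Sum>c\<in>UNIV. \<bar>\<Sum>i\<in>B. (h i (\<omega> i) c - measure_pmf.expectation (p i) (\<lambda>y. h i y c))\<bar>) / real (N k)"
    by (simp only: pw integral_divide_zero)
  also have "\<dots> \<le> sqrt (real CARD('c) * real (card B)) / real (N k)"
    by (rule divide_right_mono[OF conc[OF finite_agents BA h0 h1]]) simp
  also have "\<dots> = sqrt (real CARD('c)) / sqrt (real (N k))"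
    using npos unfolding cB by (simp add: real_sqrt_mult field_simps)
  finally show ?thesis .
qed

context mfl
begin

lemma act_conc:
  assumes k: "k < K"
  shows "measure_pmf.expectation (action_pmf K N pol t s)
     (\<lambda>a. \<Sum>u\<in>UNIV. \<bar>emp K N a u k - nuMF (pol t) (emp K N s) u k\<bar>) \<le> sqrt (real CARD('u)) / sqrt (real (N k))"
proof -
  let ?\<mu> = "emp K N s"
  define p where "p = (\<lambda>(k, j). pol t k (s (k, j)) ?\<mu>)"
  define h where "h = (\<lambda>(i::nat\<times>nat) (y::'u) (c::'u). if y = c then 1 else (0::real))"
  have n: "1 \<le> N k" using N_pos k by auto
  have e1: "emp K N a u k = (\<Sum>j<N k. h (k,j) (a (k,j)) u) / real (N k)" for a u
    unfolding h_def using k by (simp add: emp_sum)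
  have e2: "nuMF (pol t) ?\<mu> u k = (\<Sum>j<N k. measure_pmf.expectation (p (k,j)) (\<lambda>y. h (k,j) y u)) / real (N k)" for u
  proof -
    have "nuMF (pol t) ?\<mu> u k = (\<Sum>x\<in>UNIV. ?\<mu> x k * pmf (pol t k x ?\<mu>) u)"
      unfolding nuMF_def by (simp add: mult.commute)
    also have "\<dots> = (\<Sum>j<N k. pmf (pol t k (s (k, j)) ?\<mu>) u) / real (N k)"
      by (rule emp_lin[OF k])
    finally show ?thesis unfolding h_def p_def by (simp add: exp_indicator)
  qed
  have "measure_pmf.expectation (action_pmf K N pol t s)
     (\<lambda>a. \<Sum>u\<in>UNIV. \<bar>emp K N a u k - nuMF (pol t) (emp K N s) u k\<bar>)
     = measure_pmf.expectation (Pi_pmf (agents K N) undefined p)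
      (\<lambda>\<omega>. \<Sum>c\<in>UNIV. \<bar>(\<Sum>j<N k. h (k,j) (\<omega> (k,j)) c) / real (N k)
           - (\<Sum>j<N k. measure_pmf.expectation (p (k,j)) (\<lambda>y. h (k,j) y c)) / real (N k)\<bar>)"
    unfolding action_pmf_def p_def[symmetric] by (simp only: e1 e2)
  also have "\<dots> \<le> sqrt (real CARD('u)) / sqrt (real (N k))"
    by (rule class_conc[where K=K and N=N and k=k, OF k n]) (auto simp: h_def)
  finally show ?thesis .
qed

definition Qs where "Qs = (\<Sum>k<K. 1 / sqrt (real (N k)))"

lemma act_l1:
  "measure_pmf.expectation (action_pmf K N pol t s)
     (\<lambda>a. l1K K (emp K N a) (nuMF (pol t) (emp K N s))) \<le> sqrt (real CARD('u)) * Qs"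
proof -
  have "measure_pmf.expectation (action_pmf K N pol t s)
     (\<lambda>a. l1K K (emp K N a) (nuMF (pol t) (emp K N s)))
     = (\<Sum>k<K. measure_pmf.expectation (action_pmf K N pol t s)
     (\<lambda>a. \<Sum>u\<in>UNIV. \<bar>emp K N a u k - nuMF (pol t) (emp K N s) u k\<bar>))"
    unfolding l1K_def by (rule Bochner_Integration.integral_sum) simp
  also have "\<dots> \<le> (\<Sum>k<K. sqrt (real CARD('u)) / sqrt (real (N k)))"
    by (rule sum_mono) (rule act_conc, simp)
  also have "\<dots> = sqrt (real CARD('u)) * Qs"
    unfolding Qs_def by (simp add: sum_distrib_left)
  finally show ?thesis .
qed

lemma next_conc:
  assumes k: "k < K"
  shows "measure_pmf.expectation (next_pmf K N P s a)
     (\<lambda>s'. \<Sum>x\<in>UNIV. \<bar>emp K N s' x k - (\<Sum>j<N k. pmf (P k (s (k,j)) (a (k,j)) (emp K N s) (emp K N a)) x) / real (N k)\<bar>)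
     \<le> sqrt (real CARD('x)) / sqrt (real (N k))"
proof -
  define p where "p = (\<lambda>(k, j). P k (s (k, j)) (a (k, j)) (emp K N s) (emp K N a))"
  define h where "h = (\<lambda>(i::nat\<times>nat) (y::'x) (c::'x). if y = c then 1 else (0::real))"
  have n: "1 \<le> N k" using N_pos k by auto
  have e1: "emp K N s' x k = (\<Sum>j<N k. h (k,j) (s' (k,j)) x) / real (N k)" for s' x
    unfolding h_def using k by (simp add: emp_sum)
  have e2: "(\<Sum>j<N k. pmf (P k (s (k,j)) (a (k,j)) (emp K N s) (emp K N a)) x)
       = (\<Sum>j<N k. measure_pmf.expectation (p (k,j)) (\<lambda>y. h (k,j) y x))" for x
    unfolding h_def p_def by (simp add: exp_indicator)
  have "measure_pmf.expectation (next_pmf K N P s a)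
     (\<lambda>s'. \<Sum>x\<in>UNIV. \<bar>emp K N s' x k - (\<Sum>j<N k. pmf (P k (s (k,j)) (a (k,j)) (emp K N s) (emp K N a)) x) / real (N k)\<bar>)
     = measure_pmf.expectation (Pi_pmf (agents K N) undefined p)
      (\<lambda>\<omega>. \<Sum>c\<in>UNIV. \<bar>(\<Sum>j<N k. h (k,j) (\<omega> (k,j)) c) / real (N k)
           - (\<Sum>j<N k. measure_pmf.expectation (p (k,j)) (\<lambda>y. h (k,j) y c)) / real (N k)\<bar>)"
    unfolding next_pmf_def p_def[symmetric] by (simp only: e1 e2)
  also have "\<dots> \<le> sqrt (real CARD('x)) / sqrt (real (N k))"
    by (rule class_conc[where K=K and N=N and k=k, OF k n]) (auto simp: h_def)
  finally show ?thesis .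
qed

lemma avg_conc:
  assumes k: "k < K"
  shows "measure_pmf.expectation (action_pmf K N pol t s)
     (\<lambda>a. \<Sum>x\<in>UNIV. \<bar>(\<Sum>j<N k. pmf (P k (s (k,j)) (a (k,j)) (emp K N s) (nuMF (pol t) (emp K N s))) x) / real (N k)
          - PMF P (pol t) (emp K N s) x k\<bar>)
     \<le> sqrt (real CARD('x)) / sqrt (real (N k))"
proof -
  let ?\<mu> = "emp K N s"
  let ?\<nu> = "nuMF (pol t) (emp K N s)"
  define p where "p = (\<lambda>(k, j). pol t k (s (k, j)) ?\<mu>)"
  define h where "h = (\<lambda>(i::nat\<times>nat) (y::'u) (c::'x). pmf (P (fst i) (s i) y ?\<mu> ?\<nu>) c)"
  have n: "1 \<le> N k" using N_pos k by auto
  have e1: "(\<Sum>j<N k. pmf (P k (s (k,j)) (a (k,j)) ?\<mu> ?\<nu>) x) = (\<Sum>j<N k. h (k,j) (a (k,j)) x)" for a x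
    unfolding h_def by simp
  have e2: "PMF P (pol t) ?\<mu> x k = (\<Sum>j<N k. measure_pmf.expectation (p (k,j)) (\<lambda>y. h (k,j) y x)) / real (N k)" for x
  proof -
    have "PMF P (pol t) ?\<mu> x k = (\<Sum>z\<in>UNIV. ?\<mu> z k * (\<Sum>u\<in>UNIV. pmf (pol t k z ?\<mu>) u * pmf (P k z u ?\<mu> ?\<nu>) x))"
      unfolding PMF_def by (simp add: sum_distrib_left mult.assoc)
    also have "\<dots> = (\<Sum>j<N k. (\<Sum>u\<in>UNIV. pmf (pol t k (s (k,j)) ?\<mu>) u * pmf (P k (s (k,j)) u ?\<mu> ?\<nu>) x)) / real (N k)"
      by (rule emp_lin[OF k])
    finally show ?thesis unfolding h_def p_def by (simp add: exp_finite_type)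
  qed
  have "measure_pmf.expectation (action_pmf K N pol t s)
     (\<lambda>a. \<Sum>x\<in>UNIV. \<bar>(\<Sum>j<N k. pmf (P k (s (k,j)) (a (k,j)) ?\<mu> ?\<nu>) x) / real (N k)
          - PMF P (pol t) ?\<mu> x k\<bar>)
     = measure_pmf.expectation (Pi_pmf (agents K N) undefined p)
      (\<lambda>\<omega>. \<Sum>c\<in>UNIV. \<bar>(\<Sum>j<N k. h (k,j) (\<omega> (k,j)) c) / real (N k)
           - (\<Sum>j<N k. measure_pmf.expectation (p (k,j)) (\<lambda>y. h (k,j) y c)) / real (N k)\<bar>)"
    unfolding action_pmf_def p_def[symmetric] by (simp only: e1 e2)
  also have "\<dots> \<le> sqrt (real CARD('x)) / sqrt (real (N k))"
    by (rule class_conc[where K=K and N=N and k=k, OF k n]) (auto simp: h_def sum_pmf_UNIV)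
  finally show ?thesis .
qed

lemma swap_lip:
  assumes k: "k < K"
  shows "(\<Sum>x\<in>UNIV. \<bar>(\<Sum>j<N k. pmf (P k (s (k,j)) (a (k,j)) (emp K N s) (emp K N a)) x) / real (N k)
         - (\<Sum>j<N k. pmf (P k (s (k,j)) (a (k,j)) (emp K N s) (nuMF (pol t) (emp K N s))) x) / real (N k)\<bar>)
      \<le> LP * l1K K (emp K N a) (nuMF (pol t) (emp K N s))"
proof -
  let ?\<mu> = "emp K N s" and ?\<nu> = "nuMF (pol t) (emp K N s)" and ?e = "emp K N a"
  have n: "0 < real (N k)" using N_pos k by auto
  have PKs: "?\<mu> \<in> PK K" "?e \<in> PK K" "?\<nu> \<in> PK K"
    using emp_PK[OF N_pos] nuMF_PK[OF emp_PK[OF N_pos]] by auto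
  have "(\<Sum>x\<in>UNIV. \<bar>(\<Sum>j<N k. pmf (P k (s (k,j)) (a (k,j)) ?\<mu> ?e) x) / real (N k)
         - (\<Sum>j<N k. pmf (P k (s (k,j)) (a (k,j)) ?\<mu> ?\<nu>) x) / real (N k)\<bar>)
      = (\<Sum>x\<in>UNIV. \<bar>\<Sum>j<N k. pmf (P k (s (k,j)) (a (k,j)) ?\<mu> ?e) x - pmf (P k (s (k,j)) (a (k,j)) ?\<mu> ?\<nu>) x\<bar>) / real (N k)"
    using n by (simp add: sum_divide_distrib[symmetric] diff_divide_distrib[symmetric] sum_subtractf)
  also have "\<dots> \<le> (\<Sum>x\<in>UNIV. \<Sum>j<N k. \<bar>pmf (P k (s (k,j)) (a (k,j)) ?\<mu> ?e) x - pmf (P k (s (k,j)) (a (k,j)) ?\<mu> ?\<nu>) x\<bar>) / real (N k)"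
    using n by (intro divide_right_mono sum_mono sum_abs) auto
  also have "\<dots> = (\<Sum>j<N k. l1pmf (P k (s (k,j)) (a (k,j)) ?\<mu> ?e) (P k (s (k,j)) (a (k,j)) ?\<mu> ?\<nu>)) / real (N k)"
    unfolding l1pmf_def by (subst sum.swap) simp
  also have "\<dots> \<le> (\<Sum>j<N k. LP * (l1K K ?\<mu> ?\<mu> + l1K K ?e ?\<nu>)) / real (N k)"
    using n P_lip k PKs by (intro divide_right_mono sum_mono) auto
  also have "\<dots> = LP * l1K K ?e ?\<nu>"
    using n by (simp add: l1K_def)
  finally show ?thesis .
qed

lemma class_step:
  assumes k: "k < K"
  shows "measure_pmf.expectation (action_pmf K N pol t s)
     (\<lambda>a. measure_pmf.expectation (next_pmf K N P s a)
        (\<lambda>s'. \<Sum>x\<in>UNIV. \<bar>emp K N s' x k - PMF P (pol t) (emp K N s) x k\<bar>))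
   \<le> 2 * (sqrt (real CARD('x)) / sqrt (real (N k)))
      + LP * measure_pmf.expectation (action_pmf K N pol t s) (\<lambda>a. l1K K (emp K N a) (nuMF (pol t) (emp K N s)))"
proof -
  let ?\<mu> = "emp K N s" and ?\<nu> = "nuMF (pol t) (emp K N s)"
  let ?c = "sqrt (real CARD('x)) / sqrt (real (N k))"
  define m where "m = (\<lambda>a x. (\<Sum>j<N k. pmf (P k (s (k,j)) (a (k,j)) ?\<mu> (emp K N a)) x) / real (N k))"
  define m' where "m' = (\<lambda>a x. (\<Sum>j<N k. pmf (P k (s (k,j)) (a (k,j)) ?\<mu> ?\<nu>) x) / real (N k))"
  define A3 where "A3 = (\<lambda>a. \<Sum>x\<in>UNIV. \<bar>m' a x - PMF P (pol t) ?\<mu> x k\<bar>)"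
  have inner: "measure_pmf.expectation (next_pmf K N P s a)
        (\<lambda>s'. \<Sum>x\<in>UNIV. \<bar>emp K N s' x k - PMF P (pol t) ?\<mu> x k\<bar>)
       \<le> ?c + LP * l1K K (emp K N a) ?\<nu> + A3 a" for a
  proof -
    have "measure_pmf.expectation (next_pmf K N P s a)
        (\<lambda>s'. \<Sum>x\<in>UNIV. \<bar>emp K N s' x k - PMF P (pol t) ?\<mu> x k\<bar>)
      \<le> measure_pmf.expectation (next_pmf K N P s a)
        (\<lambda>s'. (\<Sum>x\<in>UNIV. \<bar>emp K N s' x k - m a x\<bar>) + ((\<Sum>x\<in>UNIV. \<bar>m a x - m' a x\<bar>) + A3 a))"
    proof (rule fin_mono[OF fin_next])
      fix s'
      have "(\<Sum>x\<in>UNIV. \<bar>emp K N s' x k - PMF P (pol t) ?\<mu> x k\<bar>)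
         \<le> (\<Sum>x\<in>UNIV. \<bar>emp K N s' x k - m a x\<bar> + (\<bar>m a x - m' a x\<bar> + \<bar>m' a x - PMF P (pol t) ?\<mu> x k\<bar>))"
        by (rule sum_mono) linarith
      then show "(\<Sum>x\<in>UNIV. \<bar>emp K N s' x k - PMF P (pol t) ?\<mu> x k\<bar>)
         \<le> (\<Sum>x\<in>UNIV. \<bar>emp K N s' x k - m a x\<bar>) + ((\<Sum>x\<in>UNIV. \<bar>m a x - m' a x\<bar>) + A3 a)"
        unfolding A3_def by (simp add: sum.distrib)
    qed
    also have "\<dots> = measure_pmf.expectation (next_pmf K N P s a) (\<lambda>s'. \<Sum>x\<in>UNIV. \<bar>emp K N s' x k - m a x\<bar>)
        + ((\<Sum>x\<in>UNIV. \<bar>m a x - m' a x\<bar>) + A3 a)"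
      by (simp add: Bochner_Integration.integral_add)
    also have "\<dots> \<le> ?c + (LP * l1K K (emp K N a) ?\<nu> + A3 a)"
      using next_conc[OF k, of s a] swap_lip[OF k, of s a t] unfolding m_def m'_def by (intro add_mono) auto
    finally show ?thesis by simp
  qed
  have "measure_pmf.expectation (action_pmf K N pol t s)
     (\<lambda>a. measure_pmf.expectation (next_pmf K N P s a)
        (\<lambda>s'. \<Sum>x\<in>UNIV. \<bar>emp K N s' x k - PMF P (pol t) ?\<mu> x k\<bar>))
     \<le> measure_pmf.expectation (action_pmf K N pol t s) (\<lambda>a. ?c + LP * l1K K (emp K N a) ?\<nu> + A3 a)"
    by (rule fin_mono[OF fin_action]) (rule inner)
  also have "\<dots> = ?c + LP * measure_pmf.expectation (action_pmf K N pol t s) (\<lambda>a. l1K K (emp K N a) ?\<nu>)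
      + measure_pmf.expectation (action_pmf K N pol t s) A3"
    by (simp add: Bochner_Integration.integral_add)
  also have "measure_pmf.expectation (action_pmf K N pol t s) A3 \<le> ?c"
    using avg_conc[OF k, of t s] unfolding A3_def m'_def by simp
  finally show ?thesis by simp
qed

lemma step_w:
  assumes w: "\<And>k. 0 \<le> w k"
  shows "measure_pmf.expectation (action_pmf K N pol t s)
     (\<lambda>a. measure_pmf.expectation (next_pmf K N P s a)
        (\<lambda>s'. \<Sum>k<K. w k * (\<Sum>x\<in>UNIV. \<bar>emp K N s' x k - PMF P (pol t) (emp K N s) x k\<bar>)))
   \<le> (\<Sum>k<K. w k * (2 * (sqrt (real CARD('x)) / sqrt (real (N k)))))
      + (\<Sum>k<K. w k) * LP * measure_pmf.expectation (action_pmf K N pol t s) (\<lambda>a. l1K K (emp K N a) (nuMF (pol t) (emp K N s)))"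
proof -
  let ?E = "measure_pmf.expectation (action_pmf K N pol t s) (\<lambda>a. l1K K (emp K N a) (nuMF (pol t) (emp K N s)))"
  have "measure_pmf.expectation (action_pmf K N pol t s)
     (\<lambda>a. measure_pmf.expectation (next_pmf K N P s a)
        (\<lambda>s'. \<Sum>k<K. w k * (\<Sum>x\<in>UNIV. \<bar>emp K N s' x k - PMF P (pol t) (emp K N s) x k\<bar>)))
    = (\<Sum>k<K. w k * measure_pmf.expectation (action_pmf K N pol t s)
     (\<lambda>a. measure_pmf.expectation (next_pmf K N P s a)
        (\<lambda>s'. \<Sum>x\<in>UNIV. \<bar>emp K N s' x k - PMF P (pol t) (emp K N s) x k\<bar>)))"
    by (simp add: Bochner_Integration.integral_sum)
  also have "\<dots> \<le> (\<Sum>k<K. w k * (2 * (sqrt (real CARD('x)) / sqrt (real (N k))) + LP * ?E))"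
    by (intro sum_mono mult_left_mono class_step w) simp
  also have "\<dots> = (\<Sum>k<K. w k * (2 * (sqrt (real CARD('x)) / sqrt (real (N k))))) + (\<Sum>k<K. w k) * LP * ?E"
    by (simp add: distrib_left sum.distrib sum_distrib_right mult.assoc)
  finally show ?thesis .
qed

lemma Npop_sum: "(\<Sum>k<K. \<Sum>j<N k. c) = real (Npop K N) * c"
  unfolding Npop_def by (simp add: sum_distrib_right)

lemma reward_step:
  "\<bar>measure_pmf.expectation (action_pmf K N pol t s) (stage_reward K N r s)
      - (\<Sum>k<K. real (N k) * rMF r (pol t) (emp K N s) k)\<bar>
    \<le> real (Npop K N) * LR * measure_pmf.expectation (action_pmf K N pol t s) (\<lambda>a. l1K K (emp K N a) (nuMF (pol t) (emp K N s)))"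
proof -
  let ?\<mu> = "emp K N s" and ?\<nu> = "nuMF (pol t) (emp K N s)"
  let ?A = "action_pmf K N pol t s"
  define p where "p = (\<lambda>(k, j). pol t k (s (k, j)) ?\<mu>)"
  have PKs: "?\<mu> \<in> PK K" "?\<nu> \<in> PK K" "\<And>a. emp K N a \<in> PK K"
    using emp_PK[OF N_pos] nuMF_PK[OF emp_PK[OF N_pos]] by auto
  define G where "G = (\<lambda>a. \<Sum>k<K. \<Sum>j<N k. r k (s (k, j)) (a (k, j)) ?\<mu> ?\<nu>)"
  have EG: "measure_pmf.expectation ?A G = (\<Sum>k<K. real (N k) * rMF r (pol t) ?\<mu> k)"
  proof -
    have "measure_pmf.expectation ?A G = (\<Sum>k<K. \<Sum>j<N k. measure_pmf.expectation ?A (\<lambda>a. r k (s (k, j)) (a (k, j)) ?\<mu> ?\<nu>))"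
      unfolding G_def by (simp add: Bochner_Integration.integral_sum)
    also have "\<dots> = (\<Sum>k<K. \<Sum>j<N k. \<Sum>u\<in>UNIV. pmf (pol t k (s (k,j)) ?\<mu>) u * r k (s (k, j)) u ?\<mu> ?\<nu>)"
    proof (intro sum.cong refl)
      fix k j assume "k \<in> {..<K}" "j \<in> {..<N k}"
      then have kj: "(k, j) \<in> agents K N" by (auto simp: agents_def)
      have "measure_pmf.expectation ?A (\<lambda>a. r k (s (k, j)) (a (k, j)) ?\<mu> ?\<nu>)
          = measure_pmf.expectation (p (k,j)) (\<lambda>u. r k (s (k, j)) u ?\<mu> ?\<nu>)"
        unfolding action_pmf_def p_def[symmetric] by (rule Pi_comp_exp[OF finite_agents kj])
      then show "measure_pmf.expectation ?A (\<lambda>a. r k (s (k, j)) (a (k, j)) ?\<mu> ?\<nu>)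
          = (\<Sum>u\<in>UNIV. pmf (pol t k (s (k,j)) ?\<mu>) u * r k (s (k, j)) u ?\<mu> ?\<nu>)"
        by (simp add: exp_finite_type p_def)
    qed
    also have "\<dots> = (\<Sum>k<K. real (N k) * rMF r (pol t) ?\<mu> k)"
    proof (rule sum.cong[OF refl])
      fix k assume "k \<in> {..<K}"
      then have k: "k < K" by simp
      have n: "0 < real (N k)" using N_pos k by auto
      have "rMF r (pol t) ?\<mu> k = (\<Sum>x\<in>UNIV. ?\<mu> x k * (\<Sum>u\<in>UNIV. pmf (pol t k x ?\<mu>) u * r k x u ?\<mu> ?\<nu>))"
        unfolding rMF_def by (simp add: sum_distrib_left mult.assoc)
      also have "\<dots> = (\<Sum>j<N k. \<Sum>u\<in>UNIV. pmf (pol t k (s (k,j)) ?\<mu>) u * r k (s (k, j)) u ?\<mu> ?\<nu>) / real (N k)"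
        by (rule emp_lin[OF k])
      finally show "(\<Sum>j<N k. \<Sum>u\<in>UNIV. pmf (pol t k (s (k,j)) ?\<mu>) u * r k (s (k, j)) u ?\<mu> ?\<nu>) = real (N k) * rMF r (pol t) ?\<mu> k"
        using n by simp
    qed
    finally show ?thesis .
  qed
  have pw: "\<bar>stage_reward K N r s a - G a\<bar> \<le> real (Npop K N) * LR * l1K K (emp K N a) ?\<nu>" for a
  proof -
    have "\<bar>stage_reward K N r s a - G a\<bar> = \<bar>\<Sum>k<K. \<Sum>j<N k. r k (s (k, j)) (a (k, j)) ?\<mu> (emp K N a) - r k (s (k, j)) (a (k, j)) ?\<mu> ?\<nu>\<bar>"
      unfolding stage_reward_def G_def by (simp add: sum_subtractf)
    also have "\<dots> \<le> (\<Sum>k<K. \<Sum>j<N k. \<bar>r k (s (k, j)) (a (k, j)) ?\<mu> (emp K N a) - r k (s (k, j)) (a (k, j)) ?\<mu> ?\<nu>\<bar>)"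
      by (rule order_trans[OF sum_abs], rule sum_mono, rule sum_abs)
    also have "\<dots> \<le> (\<Sum>k<K. \<Sum>j<N k. LR * (l1K K ?\<mu> ?\<mu> + l1K K (emp K N a) ?\<nu>))"
    proof (intro sum_mono)
      fix k j assume "k \<in> {..<K}" "j \<in> {..<N k}"
      then have "k < K" by simp
      then show "\<bar>r k (s (k, j)) (a (k, j)) ?\<mu> (emp K N a) - r k (s (k, j)) (a (k, j)) ?\<mu> ?\<nu>\<bar>
          \<le> LR * (l1K K ?\<mu> ?\<mu> + l1K K (emp K N a) ?\<nu>)"
        using r_lip PKs(1,2) PKs(3)[of a] by blast
    qed
    also have "\<dots> = real (Npop K N) * LR * l1K K (emp K N a) ?\<nu>"
      by (simp only: Npop_sum) (simp add: l1K_def)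
    finally show ?thesis .
  qed
  have "\<bar>measure_pmf.expectation ?A (stage_reward K N r s) - measure_pmf.expectation ?A G\<bar>
      = \<bar>measure_pmf.expectation ?A (\<lambda>a. stage_reward K N r s a - G a)\<bar>"
    by (simp add: Bochner_Integration.integral_diff)
  also have "\<dots> \<le> measure_pmf.expectation ?A (\<lambda>a. \<bar>stage_reward K N r s a - G a\<bar>)"
    by (rule exp_abs_le)
  also have "\<dots> \<le> measure_pmf.expectation ?A (\<lambda>a. real (Npop K N) * LR * l1K K (emp K N a) ?\<nu>)"
    by (rule fin_mono[OF fin_action pw])
  also have "\<dots> = real (Npop K N) * LR * measure_pmf.expectation ?A (\<lambda>a. l1K K (emp K N a) ?\<nu>)"
    by simp
  finally show ?thesis unfolding EG .
qed

end

definition dw :: "nat \<Rightarrow> (nat \<Rightarrow> real) \<Rightarrow> ('a::finite \<Rightarrow> nat \<Rightarrow> real) \<Rightarrow> ('a \<Rightarrow> nat \<Rightarrow> real) \<Rightarrow> real" where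
  "dw K w \<mu>1 \<mu>2 = (\<Sum>k<K. w k * (\<Sum>x\<in>UNIV. \<bar>\<mu>1 x k - \<mu>2 x k\<bar>))"

lemma l1K_dw: "l1K K \<mu>1 \<mu>2 = dw K (\<lambda>_. 1) \<mu>1 \<mu>2"
  unfolding l1K_def dw_def by simp

lemma dw_tri:
  assumes "\<And>k. 0 \<le> w k"
  shows "dw K w \<mu>1 \<mu>3 \<le> dw K w \<mu>1 \<mu>2 + dw K w \<mu>2 \<mu>3"
proof -
  have "dw K w \<mu>1 \<mu>3 \<le> (\<Sum>k<K. w k * (\<Sum>x\<in>UNIV. \<bar>\<mu>1 x k - \<mu>2 x k\<bar>) + w k * (\<Sum>x\<in>UNIV. \<bar>\<mu>2 x k - \<mu>3 x k\<bar>))"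
    unfolding dw_def
  proof (intro sum_mono)
    fix k
    have "(\<Sum>x\<in>UNIV. \<bar>\<mu>1 x k - \<mu>3 x k\<bar>) \<le> (\<Sum>x\<in>UNIV. \<bar>\<mu>1 x k - \<mu>2 x k\<bar> + \<bar>\<mu>2 x k - \<mu>3 x k\<bar>)"
      by (rule sum_mono) linarith
    then have "w k * (\<Sum>x\<in>UNIV. \<bar>\<mu>1 x k - \<mu>3 x k\<bar>) \<le> w k * (\<Sum>x\<in>UNIV. \<bar>\<mu>1 x k - \<mu>2 x k\<bar> + \<bar>\<mu>2 x k - \<mu>3 x k\<bar>)"
      by (rule mult_left_mono) (rule assms)
    then show "w k * (\<Sum>x\<in>UNIV. \<bar>\<mu>1 x k - \<mu>3 x k\<bar>) \<le> w k * (\<Sum>x\<in>UNIV. \<bar>\<mu>1 x k - \<mu>2 x k\<bar>) + w k * (\<Sum>x\<in>UNIV. \<bar>\<mu>2 x k - \<mu>3 x k\<bar>)"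
      by (simp add: sum.distrib distrib_left)
  qed
  also have "\<dots> = dw K w \<mu>1 \<mu>2 + dw K w \<mu>2 \<mu>3"
    unfolding dw_def by (simp add: sum.distrib)
  finally show ?thesis .
qed

lemma dw_nonneg: "(\<And>k. 0 \<le> w k) \<Longrightarrow> 0 \<le> dw K w \<mu>1 \<mu>2"
  unfolding dw_def by (intro sum_nonneg mult_nonneg_nonneg) (auto intro: sum_nonneg)

context mfl
begin

lemma dw_PMF:
  assumes "\<mu>1 \<in> PK K" "\<mu>2 \<in> PK K" "\<And>k. 0 \<le> w k"
  shows "dw K w (PMF P (pol t) \<mu>1) (PMF P (pol t) \<mu>2) \<le> dw K w \<mu>1 \<mu>2 + (\<Sum>k<K. w k) * cK * l1K K \<mu>1 \<mu>2"
proof -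
  have "dw K w (PMF P (pol t) \<mu>1) (PMF P (pol t) \<mu>2)
     \<le> (\<Sum>k<K. w k * ((\<Sum>x\<in>UNIV. \<bar>\<mu>1 x k - \<mu>2 x k\<bar>) + cK * l1K K \<mu>1 \<mu>2))"
    unfolding dw_def by (intro sum_mono mult_left_mono PMF_class assms) auto
  also have "\<dots> = dw K w \<mu>1 \<mu>2 + (\<Sum>k<K. w k) * cK * l1K K \<mu>1 \<mu>2"
    unfolding dw_def by (simp add: distrib_left sum.distrib sum_distrib_right mult.assoc)
  finally show ?thesis .
qed

lemma fin_bind_an[simp]: "finite (set_pmf (bind_pmf (action_pmf K N pol t s) (next_pmf K N P s)))"
  by (simp add: set_bind_pmf)

lemma rec_w:
  assumes w: "\<And>k. 0 \<le> w k" and \<mu>0: "\<mu>0 \<in> PK K"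
  shows "measure_pmf.expectation (state_dist K N pol P x0 (Suc t)) (\<lambda>s. dw K w (emp K N s) (mu_traj P pol \<mu>0 (Suc t)))
    \<le> (\<Sum>k<K. w k * (2 * (sqrt (real CARD('x)) / sqrt (real (N k))))) + (\<Sum>k<K. w k) * LP * (sqrt (real CARD('u)) * Qs)
      + measure_pmf.expectation (state_dist K N pol P x0 t)
          (\<lambda>s. dw K w (emp K N s) (mu_traj P pol \<mu>0 t) + (\<Sum>k<K. w k) * cK * l1K K (emp K N s) (mu_traj P pol \<mu>0 t))"
proof -
  let ?m = "mu_traj P pol \<mu>0 t"
  let ?C = "(\<Sum>k<K. w k * (2 * (sqrt (real CARD('x)) / sqrt (real (N k))))) + (\<Sum>k<K. w k) * LP * (sqrt (real CARD('u)) * Qs)"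
  have mPK: "?m \<in> PK K" by (rule mu_traj_PK[OF \<mu>0])
  have sw0: "0 \<le> (\<Sum>k<K. w k)" by (intro sum_nonneg w)
  have inner: "measure_pmf.expectation (action_pmf K N pol t s)
     (\<lambda>a. measure_pmf.expectation (next_pmf K N P s a) (\<lambda>s'. dw K w (emp K N s') (PMF P (pol t) ?m)))
     \<le> ?C + (dw K w (emp K N s) ?m + (\<Sum>k<K. w k) * cK * l1K K (emp K N s) ?m)" for s
  proof -
    let ?D = "dw K w (PMF P (pol t) (emp K N s)) (PMF P (pol t) ?m)"
    have "measure_pmf.expectation (action_pmf K N pol t s)
     (\<lambda>a. measure_pmf.expectation (next_pmf K N P s a) (\<lambda>s'. dw K w (emp K N s') (PMF P (pol t) ?m)))
     \<le> measure_pmf.expectation (action_pmf K N pol t s)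
     (\<lambda>a. measure_pmf.expectation (next_pmf K N P s a) (\<lambda>s'. dw K w (emp K N s') (PMF P (pol t) (emp K N s)) + ?D))"
      by (intro fin_mono fin_action fin_next dw_tri w)
    also have "\<dots> = measure_pmf.expectation (action_pmf K N pol t s)
     (\<lambda>a. measure_pmf.expectation (next_pmf K N P s a) (\<lambda>s'. dw K w (emp K N s') (PMF P (pol t) (emp K N s)))) + ?D"
      by (simp add: Bochner_Integration.integral_add)
    also have "\<dots> \<le> ((\<Sum>k<K. w k * (2 * (sqrt (real CARD('x)) / sqrt (real (N k)))))
      + (\<Sum>k<K. w k) * LP * measure_pmf.expectation (action_pmf K N pol t s) (\<lambda>a. l1K K (emp K N a) (nuMF (pol t) (emp K N s))))
      + ?D"
      unfolding dw_def by (intro add_right_mono step_w w)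
    also have "(\<Sum>k<K. w k) * LP * measure_pmf.expectation (action_pmf K N pol t s) (\<lambda>a. l1K K (emp K N a) (nuMF (pol t) (emp K N s)))
       \<le> (\<Sum>k<K. w k) * LP * (sqrt (real CARD('u)) * Qs)"
      by (intro mult_left_mono act_l1 mult_nonneg_nonneg sw0 consts_nn)
    also have "?D \<le> dw K w (emp K N s) ?m + (\<Sum>k<K. w k) * cK * l1K K (emp K N s) ?m"
      by (rule dw_PMF[OF emp_PK[OF N_pos] mPK w])
    finally show ?thesis by simp
  qed
  have "measure_pmf.expectation (state_dist K N pol P x0 (Suc t)) (\<lambda>s. dw K w (emp K N s) (mu_traj P pol \<mu>0 (Suc t)))
     = measure_pmf.expectation (state_dist K N pol P x0 t) (\<lambda>s. measure_pmf.expectation (action_pmf K N pol t s)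
     (\<lambda>a. measure_pmf.expectation (next_pmf K N P s a) (\<lambda>s'. dw K w (emp K N s') (PMF P (pol t) ?m))))"
    by (simp add: exp_bind_fin)
  also have "\<dots> \<le> measure_pmf.expectation (state_dist K N pol P x0 t)
      (\<lambda>s. ?C + (dw K w (emp K N s) ?m + (\<Sum>k<K. w k) * cK * l1K K (emp K N s) ?m))"
    by (rule fin_mono[OF fin_state inner])
  also have "\<dots> = ?C + measure_pmf.expectation (state_dist K N pol P x0 t)
      (\<lambda>s. dw K w (emp K N s) ?m + (\<Sum>k<K. w k) * cK * l1K K (emp K N s) ?m)"
    by (simp add: Bochner_Integration.integral_add)
  finally show ?thesis .
qed

lemma D0: "measure_pmf.expectation (state_dist K N pol P x0 0) (\<lambda>s. dw K w (emp K N s) (mu_traj P pol (emp K N x0) 0)) = 0"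
  by (simp add: dw_def)

lemma DW_bound:
  fixes T S SP :: real
  defines "E \<equiv> (2 + LP * T) * sqrt (real CARD('x) * real CARD('u)) * S"
  defines "th \<equiv> (\<lambda>k. real (N k) / real (Npop K N))"
  assumes TK: "real K \<le> T" and QT: "Qs \<le> T * S" and S0: "0 \<le> S"
    and Sth: "(\<Sum>k<K. th k * (1 / sqrt (real (N k)))) = S"
    and thsum: "(\<Sum>k<K. th k) = 1"
    and SP1: "1 + real K * cK \<le> SP" and SP2: "cK * T \<le> SP - 1"
  shows "measure_pmf.expectation (state_dist K N pol P x0 t) (\<lambda>s. l1K K (emp K N s) (mu_traj P pol (emp K N x0) t))
           \<le> T * E * (\<Sum>i<t. SP ^ i)
       \<and> measure_pmf.expectation (state_dist K N pol P x0 t) (\<lambda>s. dw K th (emp K N s) (mu_traj P pol (emp K N x0) t))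
           \<le> E * (\<Sum>i<t. SP ^ i)"
proof (induction t)
  case 0
  show ?case using D0[where w="\<lambda>_. 1"] D0[where w=th] by (simp add: l1K_dw)
next
  case (Suc t)
  let ?D = "measure_pmf.expectation (state_dist K N pol P x0 t) (\<lambda>s. l1K K (emp K N s) (mu_traj P pol (emp K N x0) t))"
  let ?W = "measure_pmf.expectation (state_dist K N pol P x0 t) (\<lambda>s. dw K th (emp K N s) (mu_traj P pol (emp K N x0) t))"
  let ?G = "(\<Sum>i<t. SP ^ i)"
  let ?a = "sqrt (real CARD('x))" and ?b = "sqrt (real CARD('u))" and ?c = "sqrt (real CARD('x) * real CARD('u))"
  have \<mu>0: "emp K N x0 \<in> PK K" by (rule emp_PK[OF N_pos])
  have th0: "0 \<le> th k" for k unfolding th_def by simp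
  have X1: "1 \<le> real CARD('x)" and U1: "1 \<le> real CARD('u)"
    using finite_UNIV_card_ge_0[where 'a='x] finite_UNIV_card_ge_0[where 'a='u] by auto
  have a1: "?a \<le> ?c" using X1 U1 by (intro real_sqrt_le_mono) (simp add: mult_le_cancel_left1)
  have b1: "?b \<le> ?c" using X1 U1 by (intro real_sqrt_le_mono) (simp add: mult_le_cancel_right1)
  have a0: "0 \<le> ?a" "0 \<le> ?b" by simp_all
  have cK0: "0 \<le> cK" unfolding cK_def using consts_nn by simp
  have T0: "0 \<le> T" using TK by linarith
  have E0: "0 \<le> E" unfolding E_def using consts_nn T0 S0 by simp
  have SP0: "0 \<le> SP" using SP1 cK0 by (smt (verit) of_nat_0_le_iff mult_nonneg_nonneg)
  have G0: "0 \<le> ?G" by (intro sum_nonneg zero_le_power SP0)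
  have Q0: "0 \<le> Qs" unfolding Qs_def by (simp add: sum_nonneg)
  have GS: "(\<Sum>i<Suc t. SP ^ i) = 1 + SP * ?G"
    by (simp add: sum.lessThan_Suc_shift sum_distrib_left del: sum.lessThan_Suc)
  have IH1: "?D \<le> T * E * ?G" and IH2: "?W \<le> E * ?G" using Suc by auto
  have D0': "0 \<le> ?D" by (rule Bochner_Integration.integral_nonneg) (simp add: l1K_nonneg)
  have rD: "measure_pmf.expectation (state_dist K N pol P x0 (Suc t)) (\<lambda>s. l1K K (emp K N s) (mu_traj P pol (emp K N x0) (Suc t)))
     \<le> 2 * ?a * Qs + real K * LP * (?b * Qs) + (1 + real K * cK) * ?D"
  proof -
    have "measure_pmf.expectation (state_dist K N pol P x0 (Suc t)) (\<lambda>s. l1K K (emp K N s) (mu_traj P pol (emp K N x0) (Suc t)))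
      \<le> (\<Sum>k<K. 1 * (2 * (?a / sqrt (real (N k))))) + (\<Sum>k<K. (1::real)) * LP * (?b * Qs)
      + measure_pmf.expectation (state_dist K N pol P x0 t)
          (\<lambda>s. l1K K (emp K N s) (mu_traj P pol (emp K N x0) t) + (\<Sum>k<K. (1::real)) * cK * l1K K (emp K N s) (mu_traj P pol (emp K N x0) t))"
      by (rule rec_w[where w="\<lambda>_. 1", OF _ \<mu>0, unfolded l1K_dw[symmetric]]) simp
    also have "(\<Sum>k<K. 1 * (2 * (?a / sqrt (real (N k))))) = 2 * ?a * Qs"
      unfolding Qs_def by (simp add: sum_distrib_left)
    also have "measure_pmf.expectation (state_dist K N pol P x0 t)
          (\<lambda>s. l1K K (emp K N s) (mu_traj P pol (emp K N x0) t) + (\<Sum>k<K. (1::real)) * cK * l1K K (emp K N s) (mu_traj P pol (emp K N x0) t))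
        = (1 + real K * cK) * ?D"
      by (simp add: Bochner_Integration.integral_add algebra_simps)
    finally show ?thesis by simp
  qed
  have c1: "2 * ?a * Qs + real K * LP * (?b * Qs) \<le> T * E"
  proof -
    have "2 * ?a * Qs + real K * LP * (?b * Qs) = (2 * ?a + real K * LP * ?b) * Qs" by (simp add: algebra_simps)
    also have "\<dots> \<le> (2 * ?c + T * LP * ?c) * (T * S)"
    proof (rule mult_mono)
      show "2 * ?a + real K * LP * ?b \<le> 2 * ?c + T * LP * ?c"
        using a1 b1 TK consts_nn a0 by (intro add_mono mult_mono) auto
    qed (use QT Q0 T0 S0 consts_nn in auto)
    also have "\<dots> = T * E" unfolding E_def by (simp add: algebra_simps)
    finally show ?thesis .
  qed
  have c2: "(1 + real K * cK) * ?D \<le> SP * (T * E * ?G)"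
  proof -
    have "(1 + real K * cK) * ?D \<le> (1 + real K * cK) * (T * E * ?G)"
      using IH1 cK0 by (intro mult_left_mono) auto
    also have "\<dots> \<le> SP * (T * E * ?G)"
      using SP1 T0 E0 G0 by (intro mult_right_mono) auto
    finally show ?thesis .
  qed
  have goal1: "measure_pmf.expectation (state_dist K N pol P x0 (Suc t)) (\<lambda>s. l1K K (emp K N s) (mu_traj P pol (emp K N x0) (Suc t)))
      \<le> T * E * (\<Sum>i<Suc t. SP ^ i)"
    using rD c1 c2 unfolding GS by (simp add: algebra_simps)
  have rW: "measure_pmf.expectation (state_dist K N pol P x0 (Suc t)) (\<lambda>s. dw K th (emp K N s) (mu_traj P pol (emp K N x0) (Suc t)))
     \<le> 2 * ?a * S + LP * (?b * Qs) + (?W + cK * ?D)"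
  proof -
    have "measure_pmf.expectation (state_dist K N pol P x0 (Suc t)) (\<lambda>s. dw K th (emp K N s) (mu_traj P pol (emp K N x0) (Suc t)))
      \<le> (\<Sum>k<K. th k * (2 * (?a / sqrt (real (N k))))) + (\<Sum>k<K. th k) * LP * (?b * Qs)
      + measure_pmf.expectation (state_dist K N pol P x0 t)
          (\<lambda>s. dw K th (emp K N s) (mu_traj P pol (emp K N x0) t) + (\<Sum>k<K. th k) * cK * l1K K (emp K N s) (mu_traj P pol (emp K N x0) t))"
      by (rule rec_w[OF th0 \<mu>0])
    also have "(\<Sum>k<K. th k * (2 * (?a / sqrt (real (N k))))) = 2 * ?a * S"
      unfolding Sth[symmetric] by (simp add: sum_distrib_left algebra_simps)
    also have "measure_pmf.expectation (state_dist K N pol P x0 t)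
          (\<lambda>s. dw K th (emp K N s) (mu_traj P pol (emp K N x0) t) + (\<Sum>k<K. th k) * cK * l1K K (emp K N s) (mu_traj P pol (emp K N x0) t))
        = ?W + cK * ?D"
      unfolding thsum by (simp add: Bochner_Integration.integral_add)
    finally show ?thesis unfolding thsum by simp
  qed
  have c3: "2 * ?a * S + LP * (?b * Qs) \<le> E"
  proof -
    have "2 * ?a * S \<le> 2 * ?c * S" using a1 S0 by (intro mult_right_mono) auto
    moreover have "LP * (?b * Qs) \<le> LP * (?c * (T * S))"
      using b1 QT Q0 consts_nn by (intro mult_left_mono mult_mono) auto
    ultimately show ?thesis unfolding E_def by (simp add: algebra_simps)
  qed
  have c4: "cK * ?D \<le> (SP - 1) * (E * ?G)"
  proof -
    have "cK * ?D \<le> cK * (T * E * ?G)" using IH1 cK0 by (intro mult_left_mono) auto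
    also have "\<dots> = (cK * T) * (E * ?G)" by (simp add: algebra_simps)
    also have "\<dots> \<le> (SP - 1) * (E * ?G)" using SP2 E0 G0 by (intro mult_right_mono) auto
    finally show ?thesis .
  qed
  have goal2: "measure_pmf.expectation (state_dist K N pol P x0 (Suc t)) (\<lambda>s. dw K th (emp K N s) (mu_traj P pol (emp K N x0) (Suc t)))
      \<le> E * (\<Sum>i<Suc t. SP ^ i)"
    using rW c3 c4 IH2 unfolding GS by (simp add: algebra_simps)
  show ?case using goal1 goal2 by simp
qed

end

context mfl
begin

lemma rMF_bound:
  assumes "\<mu> \<in> PK K" "k < K"
  shows "\<bar>rMF r (pol t) \<mu> k\<bar> \<le> MR"
proof -
  have "\<bar>rMF r (pol t) \<mu> k\<bar> \<le> (\<Sum>x\<in>UNIV. \<Sum>u\<in>UNIV. \<bar>\<mu> x k * pmf (pol t k x \<mu>) u * r k x u \<mu> (nuMF (pol t) \<mu>)\<bar>)"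
    unfolding rMF_def by (rule order_trans[OF sum_abs], rule sum_mono, rule sum_abs)
  also have "\<dots> \<le> (\<Sum>x\<in>UNIV. \<Sum>u\<in>UNIV. \<mu> x k * pmf (pol t k x \<mu>) u * MR)"
  proof (intro sum_mono)
    fix x u
    have "\<bar>r k x u \<mu> (nuMF (pol t) \<mu>)\<bar> \<le> MR" using r_bound assms nuMF_PK[OF assms(1)] by blast
    then show "\<bar>\<mu> x k * pmf (pol t k x \<mu>) u * r k x u \<mu> (nuMF (pol t) \<mu>)\<bar> \<le> \<mu> x k * pmf (pol t k x \<mu>) u * MR"
      using PK_D(2)[OF assms(1) assms(2)] by (simp add: abs_mult mult_left_mono)
  qed
  also have "\<dots> = MR"
    by (simp add: sum_distrib_left[symmetric] sum_distrib_right[symmetric] sum_pmf_UNIV PK_D(3)[OF assms(1,2)])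
  finally show ?thesis .
qed

lemma stage_bound: "\<bar>stage_reward K N r s a\<bar> \<le> real (Npop K N) * MR"
proof -
  have "\<bar>stage_reward K N r s a\<bar> \<le> (\<Sum>k<K. \<Sum>j<N k. \<bar>r k (s (k, j)) (a (k, j)) (emp K N s) (emp K N a)\<bar>)"
    unfolding stage_reward_def by (rule order_trans[OF sum_abs], rule sum_mono, rule sum_abs)
  also have "\<dots> \<le> (\<Sum>k<K. \<Sum>j<N k. MR)"
    using r_bound emp_PK[OF N_pos, of s] emp_PK[OF N_pos, of a] by (intro sum_mono) auto
  also have "\<dots> = real (Npop K N) * MR" by (rule Npop_sum)
  finally show ?thesis .
qed

lemma exp_sa: "measure_pmf.expectation (sa_dist K N pol P x0 t) (\<lambda>(s, a). stage_reward K N r s a)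
   = measure_pmf.expectation (state_dist K N pol P x0 t) (\<lambda>s. measure_pmf.expectation (action_pmf K N pol t s) (stage_reward K N r s))"
  unfolding sa_dist_def by (subst exp_bind_fin) auto

lemma time_bound:
  defines "th \<equiv> (\<lambda>k. real (N k) / real (Npop K N))"
  assumes Np: "0 < Npop K N" and thsum: "(\<Sum>k<K. th k) = 1"
  shows "\<bar>measure_pmf.expectation (sa_dist K N pol P x0 t) (\<lambda>(s, a). stage_reward K N r s a) / real (Npop K N)
          - (\<Sum>k<K. th k * rMF r (pol t) (mu_traj P pol (emp K N x0) t) k)\<bar>
    \<le> LR * (sqrt (real CARD('u)) * Qs)
      + MR * measure_pmf.expectation (state_dist K N pol P x0 t) (\<lambda>s. dw K th (emp K N s) (mu_traj P pol (emp K N x0) t))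
      + (MR * LQ + LR * (2 + real K * LQ)) * measure_pmf.expectation (state_dist K N pol P x0 t) (\<lambda>s. l1K K (emp K N s) (mu_traj P pol (emp K N x0) t))"
proof -
  let ?m = "mu_traj P pol (emp K N x0) t"
  let ?S = "state_dist K N pol P x0 t"
  let ?C = "MR * LQ + LR * (2 + real K * LQ)"
  define R where "R = (\<lambda>s. measure_pmf.expectation (action_pmf K N pol t s) (stage_reward K N r s) / real (Npop K N))"
  define B where "B = (\<lambda>\<mu>. \<Sum>k<K. th k * rMF r (pol t) \<mu> k)"
  have mPK: "?m \<in> PK K" by (rule mu_traj_PK[OF emp_PK[OF N_pos]])
  have th0: "0 \<le> th k" for k unfolding th_def by simp
  have b1: "\<bar>R s - B (emp K N s)\<bar> \<le> LR * (sqrt (real CARD('u)) * Qs)" for s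
  proof -
    have eq: "B (emp K N s) = (\<Sum>k<K. real (N k) * rMF r (pol t) (emp K N s) k) / real (Npop K N)"
      unfolding B_def th_def by (simp add: sum_divide_distrib)
    have "\<bar>R s - B (emp K N s)\<bar> = \<bar>measure_pmf.expectation (action_pmf K N pol t s) (stage_reward K N r s)
      - (\<Sum>k<K. real (N k) * rMF r (pol t) (emp K N s) k)\<bar> / real (Npop K N)"
      unfolding R_def eq using Np by (simp add: diff_divide_distrib[symmetric])
    also have "\<dots> \<le> real (Npop K N) * LR * measure_pmf.expectation (action_pmf K N pol t s) (\<lambda>a. l1K K (emp K N a) (nuMF (pol t) (emp K N s)))
        / real (Npop K N)"
      using Np by (intro divide_right_mono reward_step) auto
    also have "\<dots> = LR * measure_pmf.expectation (action_pmf K N pol t s) (\<lambda>a. l1K K (emp K N a) (nuMF (pol t) (emp K N s)))"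
      using Np by simp
    also have "\<dots> \<le> LR * (sqrt (real CARD('u)) * Qs)"
      by (intro mult_left_mono act_l1 consts_nn)
    finally show ?thesis .
  qed
  have b2: "\<bar>B (emp K N s) - B ?m\<bar> \<le> MR * dw K th (emp K N s) ?m + ?C * l1K K (emp K N s) ?m" for s
  proof -
    have "\<bar>B (emp K N s) - B ?m\<bar> \<le> (\<Sum>k<K. th k * \<bar>rMF r (pol t) (emp K N s) k - rMF r (pol t) ?m k\<bar>)"
      unfolding B_def by (simp add: sum_subtractf[symmetric] right_diff_distrib[symmetric])
        (rule order_trans[OF sum_abs], simp add: abs_mult th0)
    also have "\<dots> \<le> (\<Sum>k<K. th k * (MR * (\<Sum>x\<in>UNIV. \<bar>emp K N s x k - ?m x k\<bar>) + ?C * l1K K (emp K N s) ?m))"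
      by (intro sum_mono mult_left_mono rMF_class emp_PK[OF N_pos] mPK th0) auto
    also have "\<dots> = MR * dw K th (emp K N s) ?m + ?C * l1K K (emp K N s) ?m"
      unfolding dw_def by (simp add: distrib_left sum.distrib sum_distrib_left[symmetric] sum_distrib_right[symmetric]
          thsum mult.left_commute)
    finally show ?thesis .
  qed
  have "\<bar>measure_pmf.expectation ?S R - B ?m\<bar> = \<bar>measure_pmf.expectation ?S (\<lambda>s. R s - B ?m)\<bar>"
    by (simp add: Bochner_Integration.integral_diff)
  also have "\<dots> \<le> measure_pmf.expectation ?S (\<lambda>s. \<bar>R s - B ?m\<bar>)" by (rule exp_abs_le)
  also have "\<dots> \<le> measure_pmf.expectation ?S (\<lambda>s. LR * (sqrt (real CARD('u)) * Qs)
       + (MR * dw K th (emp K N s) ?m + ?C * l1K K (emp K N s) ?m))"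
  proof (rule fin_mono[OF fin_state])
    fix s
    show "\<bar>R s - B ?m\<bar> \<le> LR * (sqrt (real CARD('u)) * Qs) + (MR * dw K th (emp K N s) ?m + ?C * l1K K (emp K N s) ?m)"
      using b1[of s] b2[of s] by linarith
  qed
  also have "\<dots> = LR * (sqrt (real CARD('u)) * Qs)
      + MR * measure_pmf.expectation ?S (\<lambda>s. dw K th (emp K N s) ?m)
      + ?C * measure_pmf.expectation ?S (\<lambda>s. l1K K (emp K N s) ?m)"
    by (simp add: Bochner_Integration.integral_add)
  finally show ?thesis
    unfolding exp_sa R_def[symmetric] B_def by (simp add: R_def)
qed

end

lemma series_bound:
  fixes e :: "nat \<Rightarrow> real" and \<gamma> SP c1 c2 v :: real
  assumes g0: "0 \<le> \<gamma>" and g1: "\<gamma> < 1" and SP1: "1 < SP" and gSP: "\<gamma> * SP < 1"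
    and c1: "0 \<le> c1" and c2: "0 \<le> c2"
    and eb: "\<And>t. \<bar>e t\<bar> \<le> c1 + c2 * (\<Sum>i<t. SP ^ i)"
    and sv: "(\<lambda>t. \<gamma> ^ t * e t) sums v"
  shows "\<bar>v\<bar> \<le> c1 / (1 - \<gamma>) + c2 / (SP - 1) * (1 / (1 - \<gamma> * SP) - 1 / (1 - \<gamma>))"
proof -
  define g where "g = (\<lambda>t. \<gamma> ^ t * (c1 + c2 * (\<Sum>i<t. SP ^ i)))"
  have geq: "g t = c1 * \<gamma> ^ t + c2 / (SP - 1) * ((\<gamma> * SP) ^ t - \<gamma> ^ t)" for t
  proof -
    have "(\<Sum>i<t. SP ^ i) = (SP ^ t - 1) / (SP - 1)"
      using SP1 by (simp add: sum_gp_strict) (simp add: field_simps)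
    then have "g t = \<gamma> ^ t * (c1 + c2 * ((SP ^ t - 1) / (SP - 1)))" unfolding g_def by simp
    also have "\<dots> = c1 * \<gamma> ^ t + c2 / (SP - 1) * ((\<gamma> * SP) ^ t - \<gamma> ^ t)"
      using SP1 by (simp add: power_mult_distrib divide_simps) (simp add: algebra_simps)
    finally show ?thesis .
  qed
  have s1: "(\<lambda>t. \<gamma> ^ t) sums (1 / (1 - \<gamma>))" by (rule geometric_sums) (use g0 g1 in simp)
  have s2: "(\<lambda>t. (\<gamma> * SP) ^ t) sums (1 / (1 - \<gamma> * SP))"
    by (rule geometric_sums) (use g0 SP1 gSP in \<open>simp add: abs_mult\<close>)
  have sg: "g sums (c1 / (1 - \<gamma>) + c2 / (SP - 1) * (1 / (1 - \<gamma> * SP) - 1 / (1 - \<gamma>)))"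
    unfolding geq using sums_add[OF sums_mult[OF s1, of c1] sums_mult[OF sums_diff[OF s2 s1], of "c2 / (SP - 1)"]]
    by simp
  have bnd: "\<bar>\<gamma> ^ t * e t\<bar> \<le> g t" for t
    unfolding g_def using eb[of t] g0 by (simp add: abs_mult mult_left_mono)
  have sa: "summable (\<lambda>t. \<bar>\<gamma> ^ t * e t\<bar>)"
    by (rule summable_comparison_test[OF _ sums_summable[OF sg]]) (use bnd in auto)
  have "\<bar>v\<bar> = \<bar>\<Sum>t. \<gamma> ^ t * e t\<bar>" using sv by (simp add: sums_unique[symmetric])
  also have "\<dots> \<le> (\<Sum>t. \<bar>\<gamma> ^ t * e t\<bar>)" by (rule summable_rabs[OF sa])
  also have "\<dots> \<le> suminf g" by (rule suminf_le[OF bnd sa sums_summable[OF sg]])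
  also have "\<dots> = c1 / (1 - \<gamma>) + c2 / (SP - 1) * (1 / (1 - \<gamma> * SP) - 1 / (1 - \<gamma>))"
    using sg by (simp add: sums_unique[symmetric])
  finally show ?thesis .
qed

theorem theorem5:
  fixes K :: nat and N :: "nat \<Rightarrow> nat"
    and MR LR LP LQ \<gamma> :: real
    and P :: "nat \<Rightarrow> 'x::finite \<Rightarrow> 'u::finite \<Rightarrow> ('x \<Rightarrow> nat \<Rightarrow> real) \<Rightarrow> ('u \<Rightarrow> nat \<Rightarrow> real) \<Rightarrow> 'x pmf"
    and r :: "nat \<Rightarrow> 'x \<Rightarrow> 'u \<Rightarrow> ('x \<Rightarrow> nat \<Rightarrow> real) \<Rightarrow> ('u \<Rightarrow> nat \<Rightarrow> real) \<Rightarrow> real"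
    and pol :: "nat \<Rightarrow> nat \<Rightarrow> 'x \<Rightarrow> ('x \<Rightarrow> nat \<Rightarrow> real) \<Rightarrow> 'u pmf"
    and x0 :: "nat \<times> nat \<Rightarrow> 'x"
  defines "thinv \<equiv> Max ((\<lambda>k. real (Npop K N) / real (N k)) ` {..<K})"
  defines "CR \<equiv> MR + LR * thinv"
  defines "CP \<equiv> 2 + LP * thinv"
  defines "SR \<equiv> MR * (1 + LQ * thinv) + LR * thinv * (2 + LQ * thinv)"
  defines "SP \<equiv> (1 + LQ * thinv) + LP * thinv * (2 + LQ * thinv)"
  assumes K_pos: "1 \<le> K"
    and N_pos: "\<forall>k<K. 1 \<le> N k"
    and consts_pos: "0 < MR" "0 < LR" "0 < LP" "0 < LQ"
    and gamma: "0 \<le> \<gamma>" "\<gamma> < 1"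
    and r_bound: "\<forall>k<K. \<forall>x u \<mu> \<nu>. \<mu> \<in> PK K \<longrightarrow> \<nu> \<in> PK K \<longrightarrow> \<bar>r k x u \<mu> \<nu>\<bar> \<le> MR"
    and r_lip: "\<forall>k<K. \<forall>x u \<mu>1 \<mu>2 \<nu>1 \<nu>2. \<mu>1 \<in> PK K \<longrightarrow> \<mu>2 \<in> PK K \<longrightarrow> \<nu>1 \<in> PK K \<longrightarrow> \<nu>2 \<in> PK K \<longrightarrow>
                 \<bar>r k x u \<mu>1 \<nu>1 - r k x u \<mu>2 \<nu>2\<bar> \<le> LR * (l1K K \<mu>1 \<mu>2 + l1K K \<nu>1 \<nu>2)"
    and P_lip: "\<forall>k<K. \<forall>x u \<mu>1 \<mu>2 \<nu>1 \<nu>2. \<mu>1 \<in> PK K \<longrightarrow> \<mu>2 \<in> PK K \<longrightarrow> \<nu>1 \<in> PK K \<longrightarrow> \<nu>2 \<in> PK K \<longrightarrow>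
                 l1pmf (P k x u \<mu>1 \<nu>1) (P k x u \<mu>2 \<nu>2) \<le> LP * (l1K K \<mu>1 \<mu>2 + l1K K \<nu>1 \<nu>2)"
    and pol_lip: "\<forall>t. \<forall>k<K. \<forall>x \<mu>1 \<mu>2. \<mu>1 \<in> PK K \<longrightarrow> \<mu>2 \<in> PK K \<longrightarrow>
                 l1pmf (pol t k x \<mu>1) (pol t k x \<mu>2) \<le> LQ * l1K K \<mu>1 \<mu>2"
    and contr: "\<gamma> * SP < 1"
  shows "\<bar>vN K N \<gamma> pol P r x0 - vMF K N \<gamma> P r pol (emp K N x0)\<bar>
    \<le> CR / (1 - \<gamma>) * sqrt (real CARD('u)) * (1 / real (Npop K N)) * (\<Sum>k<K. sqrt (real (N k)))
     + CP * (SR / (SP - 1)) * sqrt (real CARD('x) * real CARD('u))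
       * (1 / real (Npop K N)) * (\<Sum>k<K. sqrt (real (N k)))
       * (1 / (1 - \<gamma> * SP) - 1 / (1 - \<gamma>))"
proof -
  interpret M: mfl K N MR LR LP LQ P r pol
    using N_pos consts_pos r_bound r_lip P_lip pol_lip by unfold_locales auto
  define th where "th = (\<lambda>k. real (N k) / real (Npop K N))"
  define S where "S = (1 / real (Npop K N)) * (\<Sum>k<K. sqrt (real (N k)))"
  define E where "E = (2 + LP * thinv) * sqrt (real CARD('x) * real CARD('u)) * S"
  define CC where "CC = MR * LQ + LR * (2 + real K * LQ)"
  have N0le: "N 0 \<le> Npop K N" unfolding Npop_def by (rule member_le_sum) (use K_pos in auto)
  have Npos: "0 < Npop K N" using N0le N_pos K_pos by force
  have Nk: "0 < real (N k)" if "k < K" for k using N_pos that by force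
  have "0 \<in> {..<K}" using K_pos by simp
  then have Kne: "{..<K} \<noteq> {}" by blast
  have Tk: "real (Npop K N) / real (N k) \<le> thinv" if "k < K" for k
    unfolding thinv_def by (rule Max_ge) (use that in auto)
  have TK: "real K \<le> thinv"
  proof (rule ccontr)
    assume "\<not> real K \<le> thinv"
    then have lt: "real (Npop K N) < real K * real (N k)" if "k < K" for k
    proof -
      have "real (Npop K N) / real (N k) < real K" using Tk[OF that] \<open>\<not> real K \<le> thinv\<close> by linarith
      then show ?thesis using Nk[OF that] by (simp add: divide_less_eq mult.commute)
    qed
    have "(\<Sum>k<K. real (Npop K N)) < (\<Sum>k<K. real K * real (N k))"
      by (rule sum_strict_mono) (use lt Kne in auto)
    also have "\<dots> = real K * real (Npop K N)"
      unfolding Npop_def by (simp add: sum_distrib_left)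
    finally show False by simp
  qed
  have T0: "0 < thinv" using TK K_pos by linarith
  have thsum: "(\<Sum>k<K. th k) = 1"
    unfolding th_def using Npos N_pos K_pos by (simp add: sum_divide_distrib[symmetric] Npop_def of_nat_sum[symmetric] del: of_nat_sum) (auto intro!: bexI[of _ 0])
  have Sth: "(\<Sum>k<K. th k * (1 / sqrt (real (N k)))) = S"
  proof -
    have "th k * (1 / sqrt (real (N k))) = sqrt (real (N k)) / real (Npop K N)" if "k < K" for k
    proof -
      have "real (N k) / sqrt (real (N k)) = sqrt (real (N k))" using Nk[OF that] by (simp add: real_div_sqrt)
      then show ?thesis unfolding th_def
        by (metis times_divide_eq_left times_divide_eq_right mult_1_right divide_divide_eq_left mult.commute)
    qed
    then show ?thesis unfolding S_def by (simp add: sum_divide_distrib)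
  qed
  have S0: "0 \<le> S" unfolding S_def by (simp add: sum_nonneg)
  have QT: "M.Qs \<le> thinv * S"
  proof -
    have "1 / sqrt (real (N k)) \<le> thinv * (sqrt (real (N k)) / real (Npop K N))" if "k < K" for k
    proof -
      have "1 / sqrt (real (N k)) = (real (Npop K N) / real (N k)) * (sqrt (real (N k)) / real (Npop K N))"
      proof -
        have "(real (Npop K N) / real (N k)) * (sqrt (real (N k)) / real (Npop K N)) = sqrt (real (N k)) / real (N k)"
          using Npos by simp
        also have "\<dots> = 1 / sqrt (real (N k))" using Nk[OF that] by (simp add: divide_simps)
        finally show ?thesis ..
      qed
      also have "\<dots> \<le> thinv * (sqrt (real (N k)) / real (Npop K N))"
        by (rule mult_right_mono[OF Tk[OF that]]) simp
      finally show ?thesis .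
    qed
    then have "M.Qs \<le> (\<Sum>k<K. thinv * (sqrt (real (N k)) / real (Npop K N)))"
      unfolding M.Qs_def by (intro sum_mono) auto
    also have "\<dots> = thinv * S" unfolding S_def by (simp add: sum_distrib_left sum_divide_distrib)
    finally show ?thesis .
  qed
  have KLQ: "real K * LQ \<le> thinv * LQ" using TK consts_pos by (intro mult_right_mono) auto
  have SP1: "1 + real K * M.cK \<le> SP"
  proof -
    have "real K * LP * (2 + real K * LQ) \<le> thinv * LP * (2 + thinv * LQ)"
      using TK KLQ consts_pos by (intro mult_mono) auto
    then show ?thesis unfolding SP_def M.cK_def using KLQ by (simp add: algebra_simps)
  qed
  have SP2: "M.cK * thinv \<le> SP - 1"
  proof -
    have "LP * (2 + real K * LQ) * thinv \<le> LP * thinv * (2 + thinv * LQ)"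
      using KLQ consts_pos T0 by (simp add: algebra_simps mult_left_mono)
    then show ?thesis unfolding SP_def M.cK_def by (simp add: algebra_simps)
  qed
  have SPg1: "1 < SP" unfolding SP_def using consts_pos T0 by (simp add: add_pos_nonneg)
  have DW: "measure_pmf.expectation (state_dist K N pol P x0 t) (\<lambda>s. l1K K (emp K N s) (mu_traj P pol (emp K N x0) t))
           \<le> thinv * E * (\<Sum>i<t. SP ^ i)
       \<and> measure_pmf.expectation (state_dist K N pol P x0 t) (\<lambda>s. dw K th (emp K N s) (mu_traj P pol (emp K N x0) t))
           \<le> E * (\<Sum>i<t. SP ^ i)" for t
    unfolding E_def th_def
    by (rule M.DW_bound[where T=thinv and S=S and SP=SP])
       (use TK QT S0 Sth thsum SP1 SP2 in \<open>simp_all add: th_def\<close>)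
  define A where "A = (\<lambda>t. measure_pmf.expectation (sa_dist K N pol P x0 t) (\<lambda>(s, a). stage_reward K N r s a))"
  define Dt where "Dt = (\<lambda>t. measure_pmf.expectation (state_dist K N pol P x0 t) (\<lambda>s. l1K K (emp K N s) (mu_traj P pol (emp K N x0) t)))"
  define Wt where "Wt = (\<lambda>t. measure_pmf.expectation (state_dist K N pol P x0 t) (\<lambda>s. dw K th (emp K N s) (mu_traj P pol (emp K N x0) t)))"
  define Bt where "Bt = (\<lambda>t. \<Sum>k<K. th k * rMF r (pol t) (mu_traj P pol (emp K N x0) t) k)"
  define e where "e = (\<lambda>t. A t / real (Npop K N) - Bt t)"
  define c1 where "c1 = CR * sqrt (real CARD('u)) * S"
  define c2 where "c2 = SR * E"
  have TB: "\<bar>e t\<bar> \<le> LR * (sqrt (real CARD('u)) * M.Qs) + MR * Wt t + CC * Dt t" for t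
    unfolding e_def A_def Bt_def Wt_def Dt_def th_def CC_def
    by (rule M.time_bound) (use Npos thsum in \<open>simp_all add: th_def\<close>)
  have E0: "0 \<le> E" unfolding E_def using consts_pos T0 S0 by simp
  have SP0: "0 \<le> SP" using SPg1 by simp
  have eb: "\<bar>e t\<bar> \<le> c1 + c2 * (\<Sum>i<t. SP ^ i)" for t
  proof -
    let ?G = "\<Sum>i<t. SP ^ i"
    have G0: "0 \<le> ?G" by (intro sum_nonneg zero_le_power SP0)
    have 1: "LR * (sqrt (real CARD('u)) * M.Qs) \<le> c1"
    proof -
      have "LR * (sqrt (real CARD('u)) * M.Qs) \<le> LR * (sqrt (real CARD('u)) * (thinv * S))"
        using QT consts_pos by (intro mult_left_mono) auto
      also have "\<dots> \<le> c1" unfolding c1_def CR_def using consts_pos S0 by (simp add: algebra_simps)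
      finally show ?thesis .
    qed
    have 2: "MR * Wt t \<le> MR * (E * ?G)" using DW[of t] consts_pos unfolding Wt_def by (intro mult_left_mono) auto
    have CC0: "0 \<le> CC" unfolding CC_def using consts_pos by simp
    have 3: "CC * Dt t \<le> CC * (thinv * E * ?G)" using DW[of t] CC0 unfolding Dt_def by (intro mult_left_mono) auto
    have 4: "MR + CC * thinv \<le> SR"
    proof -
      have "LR * (2 + real K * LQ) * thinv \<le> LR * thinv * (2 + thinv * LQ)"
        using KLQ consts_pos T0 by (simp add: algebra_simps mult_left_mono)
      then show ?thesis unfolding SR_def CC_def by (simp add: algebra_simps)
    qed
    have 5: "MR * (E * ?G) + CC * (thinv * E * ?G) \<le> c2 * ?G"
    proof -
      have "MR * (E * ?G) + CC * (thinv * E * ?G) = (MR + CC * thinv) * (E * ?G)" by (simp add: algebra_simps)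
      also have "\<dots> \<le> SR * (E * ?G)" using 4 E0 G0 by (intro mult_right_mono) auto
      finally show ?thesis unfolding c2_def by (simp add: algebra_simps)
    qed
    show ?thesis using TB[of t] 1 2 3 5 by linarith
  qed
  have gnorm: "norm \<gamma> < 1" using gamma by simp
  have Ab: "\<bar>A t\<bar> \<le> real (Npop K N) * MR" for t
  proof -
    have "\<bar>A t\<bar> \<le> measure_pmf.expectation (sa_dist K N pol P x0 t) (\<lambda>x. \<bar>(\<lambda>(s, a). stage_reward K N r s a) x\<bar>)"
      unfolding A_def by (rule exp_abs_le)
    also have "\<dots> \<le> measure_pmf.expectation (sa_dist K N pol P x0 t) (\<lambda>x. real (Npop K N) * MR)"
      by (rule fin_mono[OF fin_sa]) (auto simp: M.stage_bound)
    finally show ?thesis by simp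
  qed
  have sumA: "summable (\<lambda>t. \<gamma> ^ t * A t)"
  proof (rule summable_comparison_test[OF _ summable_mult[OF summable_geometric[OF gnorm], of "real (Npop K N) * MR"]])
    show "\<exists>M. \<forall>n\<ge>M. norm (\<gamma> ^ n * A n) \<le> real (Npop K N) * MR * \<gamma> ^ n"
    proof (intro exI allI impI)
      fix n :: nat
      have "norm (\<gamma> ^ n * A n) = \<gamma> ^ n * \<bar>A n\<bar>" using gamma by (simp add: abs_mult)
      also have "\<dots> \<le> \<gamma> ^ n * (real (Npop K N) * MR)" using Ab[of n] gamma by (intro mult_left_mono) auto
      finally show "norm (\<gamma> ^ n * A n) \<le> real (Npop K N) * MR * \<gamma> ^ n" by (simp add: mult.commute)
    qed
  qed
  have sN: "(\<lambda>t. (1 / real (Npop K N)) * (\<gamma> ^ t * A t)) sums vN K N \<gamma> pol P r x0"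
  proof -
    have "vN K N \<gamma> pol P r x0 = (1 / real (Npop K N)) * (\<Sum>t. \<gamma> ^ t * A t)"
      unfolding vN_def A_def by simp
    then show ?thesis using sums_mult[OF summable_sums[OF sumA], of "1 / real (Npop K N)"] by simp
  qed
  have sumR: "summable (\<lambda>t. \<gamma> ^ t * rMF r (pol t) (mu_traj P pol (emp K N x0) t) k)" if "k < K" for k
  proof (rule summable_comparison_test[OF _ summable_mult[OF summable_geometric[OF gnorm], of MR]])
    have rb: "\<bar>rMF r (pol t) (mu_traj P pol (emp K N x0) t) k\<bar> \<le> MR" for t
      by (rule M.rMF_bound[OF M.mu_traj_PK[OF emp_PK[OF N_pos]] that])
    show "\<exists>M. \<forall>n\<ge>M. norm (\<gamma> ^ n * rMF r (pol n) (mu_traj P pol (emp K N x0) n) k) \<le> MR * \<gamma> ^ n"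
    proof (intro exI allI impI)
      fix n :: nat
      have "norm (\<gamma> ^ n * rMF r (pol n) (mu_traj P pol (emp K N x0) n) k) = \<gamma> ^ n * \<bar>rMF r (pol n) (mu_traj P pol (emp K N x0) n) k\<bar>"
        using gamma by (simp add: abs_mult)
      also have "\<dots> \<le> \<gamma> ^ n * MR" using rb[of n] gamma by (intro mult_left_mono) auto
      finally show "norm (\<gamma> ^ n * rMF r (pol n) (mu_traj P pol (emp K N x0) n) k) \<le> MR * \<gamma> ^ n" by (simp add: mult.commute)
    qed
  qed
  have sMF: "(\<lambda>t. \<Sum>k<K. th k * (\<gamma> ^ t * rMF r (pol t) (mu_traj P pol (emp K N x0) t) k)) sums vMF K N \<gamma> P r pol (emp K N x0)"
    unfolding vMF_def th_def
    by (rule sums_sum, rule sums_mult, rule summable_sums, rule sumR) simp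
  have sD: "(\<lambda>t. \<gamma> ^ t * e t) sums (vN K N \<gamma> pol P r x0 - vMF K N \<gamma> P r pol (emp K N x0))"
  proof -
    have "(\<lambda>t. (1 / real (Npop K N)) * (\<gamma> ^ t * A t) - (\<Sum>k<K. th k * (\<gamma> ^ t * rMF r (pol t) (mu_traj P pol (emp K N x0) t) k)))
        = (\<lambda>t. \<gamma> ^ t * e t)"
      unfolding e_def Bt_def by (rule ext) (simp add: algebra_simps sum_distrib_left)
    then show ?thesis using sums_diff[OF sN sMF] by simp
  qed
  have c10: "0 \<le> c1" unfolding c1_def CR_def using consts_pos T0 S0 by simp
  have c20: "0 \<le> c2" unfolding c2_def SR_def using consts_pos T0 E0 by simp
  have main: "\<bar>vN K N \<gamma> pol P r x0 - vMF K N \<gamma> P r pol (emp K N x0)\<bar>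
      \<le> c1 / (1 - \<gamma>) + c2 / (SP - 1) * (1 / (1 - \<gamma> * SP) - 1 / (1 - \<gamma>))"
    by (rule series_bound[OF gamma SPg1 contr c10 c20 eb sD])
  have eq1: "c1 / (1 - \<gamma>) = CR / (1 - \<gamma>) * sqrt (real CARD('u)) * (1 / real (Npop K N)) * (\<Sum>k<K. sqrt (real (N k)))"
    unfolding c1_def S_def by simp
  have eq2: "c2 / (SP - 1) * (1 / (1 - \<gamma> * SP) - 1 / (1 - \<gamma>)) = CP * (SR / (SP - 1)) * sqrt (real CARD('x) * real CARD('u))
       * (1 / real (Npop K N)) * (\<Sum>k<K. sqrt (real (N k)))
       * (1 / (1 - \<gamma> * SP) - 1 / (1 - \<gamma>))"
    unfolding c2_def E_def S_def CP_def by (simp add: mult_ac)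
  show ?thesis using main unfolding eq1 eq2 .
qed

end
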